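(* If the cell is $1$-controllable, then there exists an admissible path from $\partial\Gamma_{\rm L}$ to $\partial\Gamma_{\rm R}$ whose end points are the centers $(0,0)$ and $(L,0)$ of the two openings and whose first and last straight segments are orthogonal to the openings (i.e. horizontal).
   Context: Cell geometry. Let $\Gamma_{\rm box}\subset\mathbb{R}^2$ be a bounded connected closed domain such that $(x,y)\in\Gamma_{\rm box}$ implies $x\in[0,L]$. Its boundary is $\partial\Gamma_{\rm box}=\partial\Gamma_{\rm L}\cup\partial\Gamma_{\rm R}\cup\bigcup_{k=1}^b\partial\Gamma_k$, where $\partial\Gamma_{\rm L}=\{(0,y):y\in[-a,a]\}$ and $\partial\Gamma_{\rm R}=\{(L,y):y\in[-a,a]\}$ are the two "openings" ($a>0$), and each $\partial\Gamma_k$ is an arc of a circle $C_k$ with center $c_k$, the arcs being oriented so that $\partial\Gamma_{\rm box}$ is everywhere dispersing. In the interior of $\Gamma_{\rm box}$ lies a closed disk $D$ of center $c=(L/2,0)$ and radius $r$ with $\partial D\cap\partial\Gamma_{\rm box}=\emptyset$, and for every $z\in\partial\Gamma_{\rm box}$ the segment $[c,z]$ meets $\partial\Gamma_{\rm box}$ only at $z$. The cell is $\Gamma=\Gamma_{\rm box}\setminus D$; its corners $\partial\Gamma^*$ are the points where two boundary pieces meet. Illumination and 1-controllability. For $k\in\{1,\dots,b\}$, let $I_k\subset\partial D$ be the largest open connected set of points $\theta\in\partial D$ such that a straight line leaving $\theta$ in some direction $\alpha_k(\theta)$ returns to $\theta$ after exactly one (specular) reflection, occurring on $\partial\Gamma_k$;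 equivalently, $I_k$ is the part of $\partial D$ illuminated by light emitted from $c_k$ passing only through the arc $\partial\Gamma_k$. The cell is $1$-controllable if $\bigcup_{k=1}^b I_k=\partial D$. Admissible path. A curve $\gamma:[0,1]\to\Gamma$, continuous and piecewise differentiable on $(0,1)$, is admissible if: (1) it consists of finitely many straight segments meeting at $\partial\Gamma=\partial\Gamma_{\rm box}\cup\partial D$; (2) at each meeting point on $\partial\Gamma_{\rm box}$ the incoming and outgoing angles are equal; (3) only $\gamma(0)$ and $\gamma(1)$ may lie in $\partial\Gamma_{\rm L}\cup\partial\Gamma_{\rm R}$; (4) $\gamma$ never meets a corner of $\partial\Gamma^*$; (5) $\gamma$ is nowhere tangent to $\partial D$. No reflection law is required at meeting points on $\partial D$. *)

theory Defs
  imports "HOL-Analysis.Analysis"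
begin

type_synonym pt = "real \<times> real"

definition opening_L :: "real \<Rightarrow> pt set" where
  "opening_L a = {(0, y) | y. -a \<le> y \<and> y \<le> a}"

definition opening_R :: "real \<Rightarrow> real \<Rightarrow> pt set" where
  "opening_R L a = {(L, y) | y. -a \<le> y \<and> y \<le> a}"

definition piece :: "real \<Rightarrow> real \<Rightarrow> nat \<Rightarrow> (nat \<Rightarrow> pt set) \<Rightarrow> nat \<Rightarrow> pt set" where
  "piece L a b A i = (if i = 0 then opening_L a else if i = b + 1 then opening_R L a else A i)"

definition corners :: "real \<Rightarrow> real \<Rightarrow> nat \<Rightarrow> (nat \<Rightarrow> pt set) \<Rightarrow> pt set" where
  "corners L a b A = {z. \<exists>i\<in>{0..b+1}. \<exists>j\<in>{0..b+1}. i \<noteq> j \<and> z \<in> piece L a b A i \<and> z \<in> piece L a b A j}"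

definition reflect :: "pt \<Rightarrow> pt \<Rightarrow> pt" where
  "reflect w v = v - (2 * (v \<bullet> w) / (w \<bullet> w)) *\<^sub>R w"

definition disk_center :: "real \<Rightarrow> pt" where
  "disk_center L = (L / 2, 0)"

text \<open>The cell: box minus the (closed) disk D, i.e. box minus the open disk of the same radius
  together with its boundary circle.\<close>
definition cell :: "pt set \<Rightarrow> real \<Rightarrow> real \<Rightarrow> pt set" where
  "cell Gbox L r = Gbox - ball (disk_center L) r"

definition cell_boundary :: "pt set \<Rightarrow> real \<Rightarrow> real \<Rightarrow> pt set" where
  "cell_boundary Gbox L r = frontier Gbox \<union> sphere (disk_center L) r"

definition is_cell :: "real \<Rightarrow> real \<Rightarrow> real \<Rightarrow> nat \<Rightarrow> (nat \<Rightarrow> pt) \<Rightarrow> (nat \<Rightarrow> real)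
    \<Rightarrow> (nat \<Rightarrow> pt set) \<Rightarrow> pt set \<Rightarrow> bool" where
  "is_cell L a r b cc R A Gbox \<longleftrightarrow>
     0 < L \<and> 0 < a \<and> 0 < r \<and>
     bounded Gbox \<and> closed Gbox \<and> connected Gbox \<and>
     connected (interior Gbox) \<and> closure (interior Gbox) = Gbox \<and>
     (\<forall>x y. (x, y) \<in> Gbox \<longrightarrow> 0 \<le> x \<and> x \<le> L) \<and>
     frontier Gbox = opening_L a \<union> opening_R L a \<union> (\<Union>k\<in>{1..b}. A k) \<and>
     (\<forall>k\<in>{1..b}. 0 < R k \<and>
        (\<exists>t1 t2. t1 < t2 \<and> t2 - t1 < 2 * pi \<and>
           A k = (\<lambda>t. cc k + R k *\<^sub>R (cos t, sin t)) ` {t1..t2}) \<and>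
        \<comment> \<open>dispersing: near the arc the box lies outside the circle C_k\<close>
        (\<forall>z\<in>A k. \<exists>e>0. \<forall>w\<in>Gbox. dist w z < e \<longrightarrow> R k \<le> dist w (cc k))) \<and>
     cball (disk_center L) r \<subseteq> interior Gbox \<and>
     cball (disk_center L) r \<inter> frontier Gbox = {} \<and>
     (\<forall>z\<in>frontier Gbox. closed_segment (disk_center L) z \<inter> frontier Gbox = {z})"

text \<open>theta on the circle of D: a straight line leaving theta returns to theta after exactly one
  specular reflection, occurring on the arc k (at a non-corner point z).\<close>
definition returns_after_one_reflection ::
  "real \<Rightarrow> real \<Rightarrow> real \<Rightarrow> nat \<Rightarrow> (nat \<Rightarrow> pt) \<Rightarrow> (nat \<Rightarrow> pt set) \<Rightarrow> pt set \<Rightarrow> nat \<Rightarrow> pt \<Rightarrow> bool" where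
  "returns_after_one_reflection L a r b cc A Gbox k \<theta> \<longleftrightarrow>
     (\<exists>z\<in>A k. z \<notin> corners L a b A \<and> z \<noteq> \<theta> \<and>
        open_segment \<theta> z \<subseteq> cell Gbox L r - cell_boundary Gbox L r \<and>
        (\<exists>s>0. \<theta> - z = s *\<^sub>R reflect (z - cc k) (z - \<theta>)))"

definition return_set ::
  "real \<Rightarrow> real \<Rightarrow> real \<Rightarrow> nat \<Rightarrow> (nat \<Rightarrow> pt) \<Rightarrow> (nat \<Rightarrow> pt set) \<Rightarrow> pt set \<Rightarrow> nat \<Rightarrow> pt set" where
  "return_set L a r b cc A Gbox k =
     {\<theta> \<in> sphere (disk_center L) r. returns_after_one_reflection L a r b cc A Gbox k \<theta>}"

text \<open>I_k: the largest (relatively) open connected subset of the circle of D consisting of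
  such points (empty if there is no largest one).\<close>
definition illuminated ::
  "real \<Rightarrow> real \<Rightarrow> real \<Rightarrow> nat \<Rightarrow> (nat \<Rightarrow> pt) \<Rightarrow> (nat \<Rightarrow> pt set) \<Rightarrow> pt set \<Rightarrow> nat \<Rightarrow> pt set" where
  "illuminated L a r b cc A Gbox k =
     (let S = return_set L a r b cc A Gbox k; T = top_of_set (sphere (disk_center L) r) in
      \<Union>{U. openin T U \<and> connected U \<and> U \<subseteq> S \<and>
            (\<forall>V. openin T V \<and> connected V \<and> V \<subseteq> S \<longrightarrow> V \<subseteq> U)})"

definition one_controllable ::
  "real \<Rightarrow> real \<Rightarrow> real \<Rightarrow> nat \<Rightarrow> (nat \<Rightarrow> pt) \<Rightarrow> (nat \<Rightarrow> pt set) \<Rightarrow> pt set \<Rightarrow> bool" where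
  "one_controllable L a r b cc A Gbox \<longleftrightarrow>
     (\<Union>k\<in>{1..b}. illuminated L a r b cc A Gbox k) = sphere (disk_center L) r"

definition tangent_to_disk :: "real \<Rightarrow> real \<Rightarrow> pt \<Rightarrow> pt \<Rightarrow> bool" where
  "tangent_to_disk L r p q \<longleftrightarrow>
     (\<exists>x\<in>closed_segment p q. dist x (disk_center L) = r \<and> (q - p) \<bullet> (x - disk_center L) = 0)"

text \<open>Admissible path, given by its vertices p 0, ..., p n (the curve is the polygonal line
  through them, the straight segments meeting at the points p 1, ..., p (n-1)).\<close>
definition admissible_path ::
  "real \<Rightarrow> real \<Rightarrow> real \<Rightarrow> nat \<Rightarrow> (nat \<Rightarrow> pt) \<Rightarrow> (nat \<Rightarrow> pt set) \<Rightarrow> pt set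
     \<Rightarrow> (nat \<Rightarrow> pt) \<Rightarrow> nat \<Rightarrow> bool" where
  "admissible_path L a r b cc A Gbox p n \<longleftrightarrow>
     1 \<le> n \<and>
     (\<forall>i<n. p i \<noteq> p (Suc i) \<and> closed_segment (p i) (p (Suc i)) \<subseteq> cell Gbox L r) \<and>
     \<comment> \<open>(1) segments meet at the boundary of the cell\<close>
     (\<forall>i. 0 < i \<and> i < n \<longrightarrow> p i \<in> cell_boundary Gbox L r) \<and>
     \<comment> \<open>(2) specular reflection at meeting points on the boundary of the box\<close>
     (\<forall>i. 0 < i \<and> i < n \<and> p i \<in> frontier Gbox \<longrightarrow>
        (\<exists>k\<in>{1..b}. p i \<in> A k \<and>
           (\<exists>s>0. p (Suc i) - p i = s *\<^sub>R reflect (p i - cc k) (p i - p (i - 1))))) \<and>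
     \<comment> \<open>(3) only the end points may lie in the openings\<close>
     (\<forall>i<n. \<forall>x\<in>closed_segment (p i) (p (Suc i)). x \<in> opening_L a \<union> opening_R L a \<longrightarrow>
        (i = 0 \<and> x = p 0) \<or> (i = n - 1 \<and> x = p n)) \<and>
     \<comment> \<open>(4) never meets a corner\<close>
     (\<forall>i<n. closed_segment (p i) (p (Suc i)) \<inter> corners L a b A = {}) \<and>
     \<comment> \<open>(5) nowhere tangent to the circle of D\<close>
     (\<forall>i<n. \<not> tangent_to_disk L r (p i) (p (Suc i)))"

end

theory Submission
  imports Defs
begin

definition cross :: "real \<times> real \<Rightarrow> real \<times> real \<Rightarrow> real" where
  "cross u v = fst u * snd v - snd u * fst v"

locale cellctx =
  fixes L a r :: real and b :: nat and cc :: "nat \<Rightarrow> real \<times> real" and R :: "nat \<Rightarrow> real"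
    and A :: "nat \<Rightarrow> (real \<times> real) set" and Gbox :: "(real \<times> real) set"
  assumes cell: "is_cell L a r b cc R A Gbox"
begin

abbreviation "cD \<equiv> disk_center L"
abbreviation "S \<equiv> sphere cD r"
abbreviation "Fr \<equiv> frontier Gbox"
abbreviation "Cor \<equiv> corners L a b A"
abbreviation "Opn \<equiv> opening_L a \<union> opening_R L a"

lemmas L_pos = cell[unfolded is_cell_def, THEN conjunct1]
lemmas a_pos = cell[unfolded is_cell_def, THEN conjunct2, THEN conjunct1]
lemmas r_pos = cell[unfolded is_cell_def, THEN conjunct2, THEN conjunct2, THEN conjunct1]
lemmas bnd = cell[unfolded is_cell_def, THEN conjunct2, THEN conjunct2, THEN conjunct2, THEN conjunct1]
lemmas clo = cell[unfolded is_cell_def, THEN conjunct2, THEN conjunct2, THEN conjunct2, THEN conjunct2, THEN conjunct1]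
lemmas xrange0 = cell[unfolded is_cell_def, THEN conjunct2, THEN conjunct2, THEN conjunct2, THEN conjunct2, THEN conjunct2, THEN conjunct2, THEN conjunct2, THEN conjunct2, THEN conjunct1]
lemmas fr_eq = cell[unfolded is_cell_def, THEN conjunct2, THEN conjunct2, THEN conjunct2, THEN conjunct2, THEN conjunct2, THEN conjunct2, THEN conjunct2, THEN conjunct2, THEN conjunct2, THEN conjunct1]
lemmas arcs0 = cell[unfolded is_cell_def, THEN conjunct2, THEN conjunct2, THEN conjunct2, THEN conjunct2, THEN conjunct2, THEN conjunct2, THEN conjunct2, THEN conjunct2, THEN conjunct2, THEN conjunct2, THEN conjunct1]
lemmas cball_int = cell[unfolded is_cell_def, THEN conjunct2, THEN conjunct2, THEN conjunct2, THEN conjunct2, THEN conjunct2, THEN conjunct2, THEN conjunct2, THEN conjunct2, THEN conjunct2, THEN conjunct2, THEN conjunct2, THEN conjunct1]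
lemmas cball_fr = cell[unfolded is_cell_def, THEN conjunct2, THEN conjunct2, THEN conjunct2, THEN conjunct2, THEN conjunct2, THEN conjunct2, THEN conjunct2, THEN conjunct2, THEN conjunct2, THEN conjunct2, THEN conjunct2, THEN conjunct2, THEN conjunct1]
lemmas star0 = cell[unfolded is_cell_def, THEN conjunct2, THEN conjunct2, THEN conjunct2, THEN conjunct2, THEN conjunct2, THEN conjunct2, THEN conjunct2, THEN conjunct2, THEN conjunct2, THEN conjunct2, THEN conjunct2, THEN conjunct2, THEN conjunct2]

lemma xrange: "(x, y) \<in> Gbox \<Longrightarrow> 0 \<le> x \<and> x \<le> L"
  using xrange0 by blast

lemma star: "z \<in> Fr \<Longrightarrow> closed_segment cD z \<inter> Fr = {z}"
  using star0 by blast

lemma arc: "k \<in> {1..b} \<Longrightarrow> 0 < R k \<and>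
        (\<exists>t1 t2. t1 < t2 \<and> t2 - t1 < 2 * pi \<and>
           A k = (\<lambda>t. cc k + R k *\<^sub>R (cos t, sin t)) ` {t1..t2}) \<and>
        (\<forall>z\<in>A k. \<exists>e>0. \<forall>w\<in>Gbox. dist w z < e \<longrightarrow> R k \<le> dist w (cc k))"
  using arcs0 by blast

lemma Rpos: "k \<in> {1..b} \<Longrightarrow> 0 < R k" using arc by blast

lemma Ak_dist: assumes "k \<in> {1..b}" "z \<in> A k" shows "dist z (cc k) = R k"
proof -
  obtain t1 t2 where "A k = (\<lambda>t. cc k + R k *\<^sub>R (cos t, sin t)) ` {t1..t2}"
    using arc[OF assms(1)] by blast
  then obtain t where z: "z = cc k + R k *\<^sub>R (cos t, sin t)" using assms(2) by auto
  have n1: "norm ((cos t, sin t)) = 1" by (simp add: norm_Pair)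
  have "dist z (cc k) = norm (R k *\<^sub>R (cos t, sin t))" unfolding z dist_norm by simp
  also have "\<dots> = \<bar>R k\<bar> * norm ((cos t, sin t))" by (rule norm_scaleR)
  finally show ?thesis using Rpos[OF assms(1)] n1 by simp
qed

lemma Ak_compact: assumes "k \<in> {1..b}" shows "compact (A k)"
proof -
  obtain t1 t2 where "A k = (\<lambda>t. cc k + R k *\<^sub>R (cos t, sin t)) ` {t1..t2}"
    using arc[OF assms(1)] by blast
  moreover have "compact ((\<lambda>t. cc k + R k *\<^sub>R (cos t, sin t)) ` {t1..t2})"
    by (intro compact_continuous_image continuous_intros) auto
  ultimately show ?thesis by simp
qed

lemma openingL_compact: "compact (opening_L a)"
proof -
  have "opening_L a = (\<lambda>y. (0::real, y)) ` {-a..a}" unfolding opening_L_def by auto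
  moreover have "compact ((\<lambda>y. (0::real, y)) ` {-a..a})"
    by (intro compact_continuous_image continuous_intros) auto
  ultimately show ?thesis by simp
qed

lemma openingR_compact: "compact (opening_R L a)"
proof -
  have "opening_R L a = (\<lambda>y. (L, y)) ` {-a..a}" unfolding opening_R_def by auto
  moreover have "compact ((\<lambda>y. (L, y)) ` {-a..a})"
    by (intro compact_continuous_image continuous_intros) auto
  ultimately show ?thesis by simp
qed

lemma Ak_Fr: "k \<in> {1..b} \<Longrightarrow> A k \<subseteq> Fr" using fr_eq by auto
lemma Opn_Fr: "Opn \<subseteq> Fr" using fr_eq by auto
lemma Fr_G: "Fr \<subseteq> Gbox" using clo by (simp add: frontier_subset_closed)

lemma piece_Fr: "i \<in> {0..b+1} \<Longrightarrow> piece L a b A i \<subseteq> Fr"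
  unfolding piece_def using fr_eq by auto

lemma Cor_Fr: "Cor \<subseteq> Fr"
  unfolding corners_def using piece_Fr by blast

lemma S_notFr: "x \<in> S \<Longrightarrow> x \<notin> Fr" using cball_fr by auto
lemma cD_int: "cD \<in> interior Gbox" using cball_int r_pos by auto
lemma S_int: "x \<in> S \<Longrightarrow> x \<in> interior Gbox" using cball_int by auto

lemma Fr_notcball: assumes "z \<in> Fr" shows "r < dist cD z"
proof -
  have "z \<notin> cball cD r" using cball_fr assms by blast
  then show ?thesis by (simp add: not_le)
qed

lemma connected_interior:
  fixes C G :: "'x::real_normed_vector set"
  assumes "connected C" "C \<inter> frontier G = {}" "C \<inter> interior G \<noteq> {}"
  shows "C \<subseteq> interior G"
proof (rule ccontr)
  assume "\<not> C \<subseteq> interior G"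
  then have "C - interior G \<noteq> {}" by auto
  then have "C \<inter> frontier (interior G) \<noteq> {}"
    using connected_Int_frontier[OF assms(1) assms(3)] by blast
  then show False using frontier_interior_subset assms(2) by blast
qed

lemma halfseg_interior:
  fixes x z :: "'x::real_normed_vector"
  assumes "x \<in> interior G" "\<forall>y\<in>closed_segment x z. y \<in> frontier G \<longrightarrow> y = z"
    and "0 \<le> t" "t < 1"
  shows "x + t *\<^sub>R (z - x) \<in> interior G"
proof -
  let ?C = "(\<lambda>t. x + t *\<^sub>R (z - x)) ` {0..<1}"
  have con: "connected ?C"
    by (intro connected_continuous_image continuous_intros) (auto simp: is_interval_connected_1 is_interval_def)
  have "?C \<inter> frontier G = {}"
  proof (rule ccontr)
    assume "?C \<inter> frontier G \<noteq> {}"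
    then obtain s where s: "0 \<le> s" "s < 1" "x + s *\<^sub>R (z - x) \<in> frontier G" by auto
    have "x + s *\<^sub>R (z - x) = (1 - s) *\<^sub>R x + s *\<^sub>R z" by (simp add: algebra_simps)
    then have "x + s *\<^sub>R (z - x) \<in> closed_segment x z" using s by (auto simp: in_segment)
    then have "x + s *\<^sub>R (z - x) = z" using assms(2) s(3) by blast
    moreover have "z - (x + s *\<^sub>R (z - x)) = (1 - s) *\<^sub>R (z - x)" by (simp add: algebra_simps)
    ultimately have "(1 - s) *\<^sub>R (z - x) = 0" by simp
    then have "z = x" using s by auto
    then show False using s assms(1) by (simp add: frontier_def)
  qed
  moreover have "x \<in> ?C \<inter> interior G" using assms(1) by (auto intro: image_eqI[where x=0])
  ultimately have "?C \<subseteq> interior G" using connected_interior[OF con] by blast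
  moreover have "x + t *\<^sub>R (z - x) \<in> ?C" using assms(3,4) by auto
  ultimately show ?thesis by blast
qed

end

definition zf :: "real \<times> real \<Rightarrow> real \<Rightarrow> real \<times> real \<Rightarrow> real \<times> real" where
  "zf C Rr \<theta> = C + (Rr / norm (\<theta> - C)) *\<^sub>R (\<theta> - C)"

lemma reflect_parallel:
  fixes v w :: "real \<times> real"
  assumes "s > 0" "-v = s *\<^sub>R reflect w v"
  shows "\<exists>\<kappa>. v = \<kappa> *\<^sub>R w"
proof -
  define m where "m = s * (2 * (v \<bullet> w) / (w \<bullet> w))"
  have "-v = s *\<^sub>R v - m *\<^sub>R w" using assms(2) unfolding reflect_def m_def
    by (simp add: algebra_simps)
  then have "(1 + s) *\<^sub>R v = m *\<^sub>R w" by (simp add: algebra_simps)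
  then have "(1 / (1 + s)) *\<^sub>R ((1 + s) *\<^sub>R v) = (m / (1 + s)) *\<^sub>R w" by simp
  then have "v = (m / (1 + s)) *\<^sub>R w" using assms(1) by simp
  then show ?thesis by blast
qed

context cellctx
begin

lemma ret_normal:
  assumes k: "k \<in> {1..b}" and z: "z \<in> A k" "z \<noteq> \<theta>"
    and seg: "open_segment \<theta> z \<subseteq> cell Gbox L r"
    and s: "s > 0" "\<theta> - z = s *\<^sub>R reflect (z - cc k) (z - \<theta>)"
  shows "\<exists>\<mu>>1. \<theta> - cc k = \<mu> *\<^sub>R (z - cc k)"
proof -
  define w where "w = z - cc k"
  define v where "v = z - \<theta>"
  have nw: "norm w = R k" using Ak_dist[OF k z(1)] by (simp add: w_def dist_norm)
  have Rk: "R k > 0" using Rpos k .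
  have "-v = s *\<^sub>R reflect w v" using s(2) by (simp add: v_def w_def)
  then obtain \<kappa> where vk: "v = \<kappa> *\<^sub>R w" using reflect_parallel s(1) by blast
  have k0: "\<kappa> \<noteq> 0" using vk z(2) v_def by auto
  have th: "\<theta> - cc k = (1 - \<kappa>) *\<^sub>R w"
  proof -
    have "\<theta> - cc k = w - v" by (simp add: v_def w_def)
    then show ?thesis using vk by (simp add: algebra_simps)
  qed
  have "\<kappa> < 0"
  proof (rule ccontr)
    assume "\<not> \<kappa> < 0"
    then have kp: "\<kappa> > 0" using k0 by auto
    obtain e where e: "e > 0" "\<forall>w'\<in>Gbox. dist w' z < e \<longrightarrow> R k \<le> dist w' (cc k)"
      using arc[OF k] z(1) by blast
    define \<tau> where "\<tau> = min (1/2) (min (1/(2*\<kappa>)) (e/(2*\<kappa>*R k)))"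
    have t0: "0 < \<tau>" using kp e Rk by (simp add: \<tau>_def)
    have t1: "\<tau> < 1" by (simp add: \<tau>_def)
    have "\<tau> \<le> 1/(2*\<kappa>)" by (simp add: \<tau>_def)
    then have t2: "\<tau> * \<kappa> < 1" using kp by (simp add: field_simps)
    have "\<tau> \<le> e/(2*\<kappa>*R k)" by (simp add: \<tau>_def)
    then have t3: "\<tau> * \<kappa> * R k < e" using kp Rk e by (simp add: field_simps)
    define x where "x = z + \<tau> *\<^sub>R (\<theta> - z)"
    have "x = (1 - (1 - \<tau>)) *\<^sub>R \<theta> + (1 - \<tau>) *\<^sub>R z" by (simp add: x_def algebra_simps)
    then have "\<exists>u>0. u < 1 \<and> x = (1 - u) *\<^sub>R \<theta> + u *\<^sub>R z" using t0 t1
      by (intro exI[of _ "1 - \<tau>"]) auto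
    then have "x \<in> open_segment \<theta> z" using z(2) unfolding in_segment by auto
    then have xG: "x \<in> Gbox" using seg unfolding cell_def by auto
    have "x - cc k = w - \<tau> *\<^sub>R v" by (simp add: x_def w_def v_def algebra_simps)
    then have xc: "x - cc k = (1 - \<tau> * \<kappa>) *\<^sub>R w" using vk by (simp add: algebra_simps)
    have xz: "x - z = (- (\<tau> * \<kappa>)) *\<^sub>R w"
      using vk by (simp add: x_def v_def algebra_simps)
    have "dist x z = \<tau> * \<kappa> * R k" using xz nw t0 kp by (simp add: dist_norm)
    then have "R k \<le> dist x (cc k)" using e(2) xG t3 by auto
    moreover have "dist x (cc k) = (1 - \<tau> * \<kappa>) * R k" using xc nw t2 by (simp add: dist_norm)
    moreover have "\<tau> * \<kappa> * R k > 0" using t0 kp Rk by simp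
    ultimately show False by (simp add: algebra_simps)
  qed
  then show ?thesis using th by (intro exI[of _ "1 - \<kappa>"]) (simp add: w_def)
qed

lemma ret_tangent:
  assumes \<theta>S: "\<theta> \<in> S" and z: "z \<noteq> \<theta>" and seg: "open_segment \<theta> z \<subseteq> cell Gbox L r"
  shows "(z - \<theta>) \<bullet> (\<theta> - cD) \<ge> 0"
proof (rule ccontr)
  define v where "v = z - \<theta>"
  define g where "g = v \<bullet> (\<theta> - cD)"
  assume "\<not> (z - \<theta>) \<bullet> (\<theta> - cD) \<ge> 0"
  then have g0: "g < 0" by (simp add: g_def v_def)
  have vv: "v \<bullet> v > 0" using z by (simp add: v_def)
  define \<tau> where "\<tau> = min (1/2) (- g / (v \<bullet> v))"
  have "g / (v \<bullet> v) < 0" by (rule divide_neg_pos[OF g0 vv])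
  then have "0 < - g / (v \<bullet> v)" by simp
  then have t0: "0 < \<tau>" by (simp add: \<tau>_def)
  have t1: "\<tau> < 1" by (simp add: \<tau>_def)
  have "\<tau> \<le> - g / (v \<bullet> v)" by (simp add: \<tau>_def)
  then have t2: "\<tau> * (v \<bullet> v) \<le> - g" using vv by (simp add: field_simps)
  define x where "x = \<theta> + \<tau> *\<^sub>R v"
  have "x = (1 - \<tau>) *\<^sub>R \<theta> + \<tau> *\<^sub>R z" by (simp add: x_def v_def algebra_simps)
  then have "\<exists>u>0. u < 1 \<and> x = (1 - u) *\<^sub>R \<theta> + u *\<^sub>R z" using t0 t1
    by (intro exI[of _ "\<tau>"]) auto
  then have "x \<in> open_segment \<theta> z" using z unfolding in_segment by auto
  then have "x \<notin> ball cD r" using seg unfolding cell_def by auto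
  then have "r \<le> norm (x - cD)" by (simp add: dist_norm norm_minus_commute)
  then have "r * r \<le> (x - cD) \<bullet> (x - cD)" using r_pos
    by (metis mult_mono norm_ge_zero dot_square_norm power2_eq_square less_le)
  moreover have "(x - cD) \<bullet> (x - cD) = (\<theta> - cD) \<bullet> (\<theta> - cD) + 2 * \<tau> * g + \<tau> * (\<tau> * (v \<bullet> v))"
    by (simp add: x_def g_def algebra_simps inner_add_left inner_add_right inner_commute)
  moreover have "(\<theta> - cD) \<bullet> (\<theta> - cD) = r * r" using \<theta>S
    by (simp add: dot_square_norm dist_norm norm_minus_commute power2_eq_square)
  moreover have "\<tau> * (\<tau> * (v \<bullet> v)) \<le> \<tau> * (- g)" using t0 t2 by (intro mult_left_mono) auto
  moreover have "\<tau> * g < 0" using t0 g0 by (simp add: mult_pos_neg)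
  ultimately show False by linarith
qed

lemma ret_facts:
  assumes k: "k \<in> {1..b}" and th: "\<theta> \<in> return_set L a r b cc A Gbox k"
  shows "\<theta> \<in> S" "R k < norm (\<theta> - cc k)" "zf (cc k) (R k) \<theta> \<in> A k"
    "zf (cc k) (R k) \<theta> \<notin> Cor" "zf (cc k) (R k) \<theta> \<noteq> \<theta>"
    "open_segment \<theta> (zf (cc k) (R k) \<theta>) \<subseteq> cell Gbox L r - cell_boundary Gbox L r"
    "(cc k - \<theta>) \<bullet> (\<theta> - cD) \<ge> 0"
proof -
  from th obtain z s where \<theta>S: "\<theta> \<in> S" and z: "z \<in> A k" "z \<notin> Cor" "z \<noteq> \<theta>"
    and seg: "open_segment \<theta> z \<subseteq> cell Gbox L r - cell_boundary Gbox L r"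
    and s: "s > 0" "\<theta> - z = s *\<^sub>R reflect (z - cc k) (z - \<theta>)"
    unfolding return_set_def returns_after_one_reflection_def by blast
  obtain \<mu> where mu: "\<mu> > 1" "\<theta> - cc k = \<mu> *\<^sub>R (z - cc k)"
    using ret_normal[OF k z(1) z(3) _ s] seg by blast
  have nz: "norm (z - cc k) = R k" using Ak_dist[OF k z(1)] by (simp add: dist_norm)
  have Rk: "R k > 0" using Rpos k .
  have nt: "norm (\<theta> - cc k) = \<mu> * R k" using mu nz by simp
  show "\<theta> \<in> S" by fact
  show "R k < norm (\<theta> - cc k)" using nt mu Rk by simp
  have zz: "zf (cc k) (R k) \<theta> = z"
  proof -
    have "zf (cc k) (R k) \<theta> = cc k + (R k / (\<mu> * R k)) *\<^sub>R (\<mu> *\<^sub>R (z - cc k))"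
      unfolding zf_def nt unfolding mu(2) ..
    also have "\<dots> = cc k + (z - cc k)" using mu Rk by simp
    finally show ?thesis by simp
  qed
  show "zf (cc k) (R k) \<theta> \<in> A k" "zf (cc k) (R k) \<theta> \<notin> Cor" "zf (cc k) (R k) \<theta> \<noteq> \<theta>"
    "open_segment \<theta> (zf (cc k) (R k) \<theta>) \<subseteq> cell Gbox L r - cell_boundary Gbox L r"
    using zz z seg by auto
  have g: "(z - \<theta>) \<bullet> (\<theta> - cD) \<ge> 0" using ret_tangent[OF \<theta>S z(3)] seg by blast
  have "z - \<theta> = (z - cc k) - (\<theta> - cc k)" by simp
  also have "\<dots> = (1 / \<mu>) *\<^sub>R (\<theta> - cc k) - (\<theta> - cc k)" using mu by simp
  also have "\<dots> = ((\<mu> - 1) / \<mu>) *\<^sub>R (cc k - \<theta>)" using mu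
    by (simp add: algebra_simps diff_divide_distrib)
  finally have "(z - \<theta>) \<bullet> (\<theta> - cD) = ((\<mu> - 1) / \<mu>) * ((cc k - \<theta>) \<bullet> (\<theta> - cD))" by simp
  then have "0 \<le> ((\<mu> - 1) / \<mu>) * ((cc k - \<theta>) \<bullet> (\<theta> - cD))" using g by simp
  moreover have "(\<mu> - 1) / \<mu> > 0" using mu by simp
  ultimately show "(cc k - \<theta>) \<bullet> (\<theta> - cD) \<ge> 0"
    by (metis zero_le_mult_iff not_less)
qed

end

lemma joint_pos:
  fixes g :: "'x::metric_space \<Rightarrow> 'y::metric_space \<Rightarrow> real"
  assumes "continuous_on UNIV (\<lambda>p. g (fst p) (snd p))" "g x0 y0 > 0"
  shows "\<exists>e>0. \<forall>x y. dist x x0 < e \<longrightarrow> dist y y0 < e \<longrightarrow> g x y > 0"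
proof -
  obtain d where d: "d > 0" "\<forall>p'\<in>UNIV. dist p' (x0, y0) < d \<longrightarrow>
      dist (g (fst p') (snd p')) (g (fst (x0, y0)) (snd (x0, y0))) < g x0 y0"
    using assms(1) assms(2) unfolding continuous_on_iff by blast
  show ?thesis
  proof (intro exI[of _ "d/2"] conjI allI impI)
    show "0 < d / 2" using d by simp
    fix x y assume h: "dist x x0 < d / 2" "dist y y0 < d / 2"
    have "dist (x, y) (x0, y0) \<le> dist x x0 + dist y y0"
      unfolding dist_Pair_Pair by (rule sqrt_sum_squares_le_sum) auto
    then have "dist (x, y) (x0, y0) < d" using h by simp
    then have "dist (g x y) (g x0 y0) < g x0 y0" using d(2)[rule_format, of "(x, y)"] by simp
    then show "g x y > 0" by (simp add: dist_real_def)
  qed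
qed

lemma normsq_expand:
  fixes p v :: "real \<times> real"
  shows "(p + s *\<^sub>R v) \<bullet> (p + s *\<^sub>R v) = p \<bullet> p + 2 * s * (v \<bullet> p) + s * s * (v \<bullet> v)"
  by (simp add: algebra_simps inner_add_left inner_add_right inner_commute)

lemma ray_out:
  fixes p v :: "real \<times> real"
  assumes "norm p = \<rho>" "v \<bullet> p > 0" "s > 0"
  shows "norm (p + s *\<^sub>R v) > \<rho>"
proof -
  have "s * s * (v \<bullet> v) \<ge> 0" by simp
  moreover have "2 * s * (v \<bullet> p) > 0" using assms by simp
  ultimately have "(p + s *\<^sub>R v) \<bullet> (p + s *\<^sub>R v) > p \<bullet> p" unfolding normsq_expand by linarith
  then have "norm (p + s *\<^sub>R v) ^ 2 > norm p ^ 2" by (simp add: power2_norm_eq_inner)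
  then show ?thesis using assms(1) by (meson norm_ge_zero power_less_imp_less_base)
qed

context cellctx
begin

definition good :: "real \<times> real \<Rightarrow> real \<times> real \<Rightarrow> bool" where
  "good \<theta> z \<longleftrightarrow> \<theta> \<in> S \<and> z \<in> Fr \<and> \<theta> \<noteq> z \<and> closed_segment \<theta> z \<subseteq> cell Gbox L r \<and>
     closed_segment \<theta> z \<inter> Opn = {} \<and> closed_segment \<theta> z \<inter> Cor = {} \<and>
     \<not> tangent_to_disk L r \<theta> z \<and> \<not> tangent_to_disk L r z \<theta>"

definition Pk :: "nat \<Rightarrow> (real \<times> real) set" where
  "Pk k = Opn \<union> (\<Union>j\<in>{1..b} - {k}. A j)"

lemma Pk_closed: "closed (Pk k)"
  unfolding Pk_def
  using openingL_compact openingR_compact Ak_compact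
  by (intro closed_Un closed_UN compact_imp_closed) auto

lemma piece_Pk: assumes "k \<in> {1..b}" "i \<in> {0..b+1}" "i \<noteq> k" shows "piece L a b A i \<subseteq> Pk k"
  using assms unfolding piece_def Pk_def by auto

lemma notPk_notCor: assumes k: "k \<in> {1..b}" and z: "z \<in> A k" "z \<notin> Pk k" shows "z \<notin> Cor"
proof
  assume "z \<in> Cor"
  then obtain i j where ij: "i \<in> {0..b+1}" "j \<in> {0..b+1}" "i \<noteq> j"
    "z \<in> piece L a b A i" "z \<in> piece L a b A j" unfolding corners_def by blast
  show False
  proof (cases "i = k")
    case True
    then have "j \<noteq> k" using ij by simp
    then show False using piece_Pk[OF k ij(2)] ij z by blast
  next
    case False
    then show False using piece_Pk[OF k ij(1)] ij z by blast
  qed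
qed

lemma Cor_intro: "i \<in> {0..b+1} \<Longrightarrow> j \<in> {0..b+1} \<Longrightarrow> i \<noteq> j \<Longrightarrow> z \<in> piece L a b A i
    \<Longrightarrow> z \<in> piece L a b A j \<Longrightarrow> z \<in> Cor"
  unfolding corners_def by blast

lemma piece0: "piece L a b A 0 = opening_L a" unfolding piece_def by simp
lemma pieceb: "piece L a b A (b+1) = opening_R L a" unfolding piece_def by simp
lemma piecek: "k \<in> {1..b} \<Longrightarrow> piece L a b A k = A k" unfolding piece_def by simp

lemma Cor_notPk: assumes k: "k \<in> {1..b}" and z: "z \<in> A k" "z \<notin> Cor" shows "z \<notin> Pk k"
proof
  assume zP: "z \<in> Pk k"
  have zk: "z \<in> piece L a b A k" using z k piecek by simp
  have k1: "k \<in> {0..b+1}" "k \<noteq> 0" "k \<noteq> b+1" using k by auto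
  consider "z \<in> opening_L a" | "z \<in> opening_R L a" | j where "j \<in> {1..b}" "j \<noteq> k" "z \<in> A j"
    using zP unfolding Pk_def by blast
  then show False
  proof cases
    case 1
    then show False using Cor_intro[of 0 k z] zk k1 z(2) piece0 by simp
  next
    case 2
    then show False using Cor_intro[of "b+1" k z] zk k1 z(2) pieceb by simp
  next
    case 3
    then have "j \<in> {0..b+1}" by auto
    then show False using Cor_intro[of j k z] zk k1 z(2) 3 piecek[OF 3(1)] by simp
  qed
qed

lemma Fr_near: assumes k: "k \<in> {1..b}" "x \<in> Fr" "x \<notin> Pk k" shows "x \<in> A k"
  using assms fr_eq unfolding Pk_def by auto

end

lemma conv_dist_lt:
  fixes t t0 z z0 :: "real \<times> real"
  assumes "0 \<le> s" "s < 1" "dist t t0 < e" "dist z z0 < e"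
  shows "dist ((1 - s) *\<^sub>R t + s *\<^sub>R z) ((1 - s) *\<^sub>R t0 + s *\<^sub>R z0) < e"
proof -
  have "(1 - s) *\<^sub>R t + s *\<^sub>R z - ((1 - s) *\<^sub>R t0 + s *\<^sub>R z0) = (1 - s) *\<^sub>R (t - t0) + s *\<^sub>R (z - z0)"
    by (simp add: algebra_simps)
  then have "dist ((1 - s) *\<^sub>R t + s *\<^sub>R z) ((1 - s) *\<^sub>R t0 + s *\<^sub>R z0)
      = norm ((1 - s) *\<^sub>R (t - t0) + s *\<^sub>R (z - z0))" by (simp add: dist_norm)
  also have "\<dots> \<le> norm ((1 - s) *\<^sub>R (t - t0)) + norm (s *\<^sub>R (z - z0))" by (rule norm_triangle_ineq)
  also have "\<dots> = (1 - s) * dist t t0 + s * dist z z0" using assms by (simp add: dist_norm)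
  also have "\<dots> < (1 - s) * e + s * e"
  proof -
    have "(1 - s) * dist t t0 < (1 - s) * e" using assms by simp
    moreover have "s * dist z z0 \<le> s * e" using assms by (simp add: mult_left_mono)
    ultimately show ?thesis by linarith
  qed
  also have "\<dots> = e" by (simp add: algebra_simps)
  finally show ?thesis .
qed

context cellctx
begin

lemma seg_out:
  assumes \<theta>S: "\<theta> \<in> S" and G1: "(z - \<theta>) \<bullet> (\<theta> - cD) > 0" and y: "y \<in> closed_segment \<theta> z"
  shows "r \<le> dist cD y" "y \<noteq> \<theta> \<Longrightarrow> r < dist cD y"
proof -
  obtain s where s: "0 \<le> s" "s \<le> 1" "y = (1 - s) *\<^sub>R \<theta> + s *\<^sub>R z" using y in_segment(1) by blast
  have ye: "y - cD = (\<theta> - cD) + s *\<^sub>R (z - \<theta>)" using s(3) by (simp add: algebra_simps)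
  have nt: "norm (\<theta> - cD) = r" using \<theta>S by (simp add: dist_norm norm_minus_commute)
  have dy: "dist cD y = norm (y - cD)" by (simp add: dist_norm norm_minus_commute)
  show "y \<noteq> \<theta> \<Longrightarrow> r < dist cD y"
  proof -
    assume "y \<noteq> \<theta>"
    then have "s \<noteq> 0" using s by auto
    then have "s > 0" using s by simp
    then have "r < norm ((\<theta> - cD) + s *\<^sub>R (z - \<theta>))"
      using ray_out[OF nt _ , of "z - \<theta>" s] G1 by (simp add: inner_commute)
    then show ?thesis by (simp only: dy ye)
  qed
  show "r \<le> dist cD y"
  proof (cases "y = \<theta>")
    case True then show ?thesis using \<theta>S by simp
  next
    case False
    then have "s \<noteq> 0" using s by auto
    then have "s > 0" using s by simp
    then have "r < norm ((\<theta> - cD) + s *\<^sub>R (z - \<theta>))"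
      using ray_out[OF nt _ , of "z - \<theta>" s] G1 by (simp add: inner_commute)
    then show ?thesis by (simp only: dy ye)
  qed
qed

lemma seg_valid_near:
  assumes k: "k \<in> {1..b}" and \<theta>0: "\<theta>0 \<in> S" and z0: "z0 \<in> A k" "z0 \<notin> Cor"
    and fr0: "\<forall>y\<in>closed_segment \<theta>0 z0. y \<in> Fr \<longrightarrow> y = z0"
    and g1: "(z0 - \<theta>0) \<bullet> (\<theta>0 - cD) > 0" and g2: "(\<theta>0 - z0) \<bullet> (z0 - cc k) > 0"
  shows "\<exists>\<epsilon>>0. \<forall>\<theta> z. \<theta> \<in> S \<longrightarrow> z \<in> A k \<longrightarrow> dist \<theta> \<theta>0 < \<epsilon> \<longrightarrow> dist z z0 < \<epsilon> \<longrightarrow>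
            good \<theta> z \<and> (\<theta> - z) \<bullet> (z - cc k) > 0"
proof -
  have c1: "continuous_on UNIV (\<lambda>p::(real\<times>real)\<times>(real\<times>real). (snd p - fst p) \<bullet> (fst p - cD))"
    by (intro continuous_intros)
  obtain e1 where e1: "e1 > 0" "\<forall>\<theta> z. dist \<theta> \<theta>0 < e1 \<longrightarrow> dist z z0 < e1 \<longrightarrow> (z - \<theta>) \<bullet> (\<theta> - cD) > 0"
    using joint_pos[where g="\<lambda>\<theta> z. (z - \<theta>) \<bullet> (\<theta> - cD)", OF c1 g1] by blast
  have c2: "continuous_on UNIV (\<lambda>p::(real\<times>real)\<times>(real\<times>real). (fst p - snd p) \<bullet> (snd p - cc k))"
    by (intro continuous_intros)
  obtain e2 where e2: "e2 > 0" "\<forall>\<theta> z. dist \<theta> \<theta>0 < e2 \<longrightarrow> dist z z0 < e2 \<longrightarrow> (\<theta> - z) \<bullet> (z - cc k) > 0"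
    using joint_pos[where g="\<lambda>\<theta> z. (\<theta> - z) \<bullet> (z - cc k)", OF c2 g2] by blast
  have z0P: "z0 \<notin> Pk k" by (rule Cor_notPk[OF k z0])
  have "open (- Pk k)" using Pk_closed by (simp add: open_Compl)
  then obtain \<delta>1 where \<delta>1: "\<delta>1 > 0" "ball z0 \<delta>1 \<subseteq> - Pk k"
    using z0P open_contains_ball by blast
  define K where "K = closed_segment \<theta>0 z0 - ball z0 (\<delta>1/2)"
  have cK: "compact K" unfolding K_def by (intro compact_diff compact_segment open_ball)
  have KF: "K \<inter> Fr = {}"
  proof (rule ccontr)
    assume "K \<inter> Fr \<noteq> {}"
    then obtain y where "y \<in> K" "y \<in> Fr" by blast
    then have "y = z0" "y \<notin> ball z0 (\<delta>1/2)" using fr0 unfolding K_def by auto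
    then show False using \<delta>1 by simp
  qed
  obtain \<eta> where \<eta>: "\<eta> > 0" "\<forall>x\<in>K. \<forall>y\<in>Fr. \<eta> \<le> dist x y"
    using separate_compact_closed[OF cK frontier_closed KF] by blast
  define \<epsilon> where "\<epsilon> = min (min e1 e2) (min (\<delta>1/2) \<eta>)"
  have \<epsilon>0: "\<epsilon> > 0" using e1 e2 \<delta>1 \<eta> by (simp add: \<epsilon>_def)
  show ?thesis
  proof (intro exI[of _ \<epsilon>] conjI allI impI \<epsilon>0)
    fix \<theta> z assume \<theta>S: "\<theta> \<in> S" and zA: "z \<in> A k" and d\<theta>: "dist \<theta> \<theta>0 < \<epsilon>" and dz: "dist z z0 < \<epsilon>"
    have "dist \<theta> \<theta>0 < e1" "dist z z0 < e1" "dist \<theta> \<theta>0 < e2" "dist z z0 < e2"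
      using d\<theta> dz by (simp_all add: \<epsilon>_def)
    then have G1: "(z - \<theta>) \<bullet> (\<theta> - cD) > 0" and G2: "(\<theta> - z) \<bullet> (z - cc k) > 0"
      using e1(2) e2(2) by blast+
    show "(\<theta> - z) \<bullet> (z - cc k) > 0" by (rule G2)
    have "dist z0 z * 2 < \<delta>1" using dz by (simp add: \<epsilon>_def dist_commute)
    then have "dist z0 z < \<delta>1" using zero_le_dist[of z0 z] by linarith
    then have zP: "z \<notin> Pk k" using \<delta>1 by auto
    have zC: "z \<notin> Cor" by (rule notPk_notCor[OF k zA zP])
    have zFr: "z \<in> Fr" using Ak_Fr k zA by blast
    have \<theta>Fr: "\<theta> \<notin> Fr" using S_notFr \<theta>S by blast
    have nzc: "norm (z - cc k) = R k" using Ak_dist[OF k zA] by (simp add: dist_norm)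
    have nFr: "\<forall>y\<in>closed_segment \<theta> z. y \<in> Fr \<longrightarrow> y = z"
    proof (intro ballI impI)
      fix y assume y: "y \<in> closed_segment \<theta> z" "y \<in> Fr"
      obtain s where s: "0 \<le> s" "s \<le> 1" "y = (1 - s) *\<^sub>R \<theta> + s *\<^sub>R z" using y(1) in_segment(1) by blast
      show "y = z"
      proof (rule ccontr)
        assume yz: "y \<noteq> z"
        have s1: "s < 1" using s yz by (cases "s = 1") auto
        define y0 where "y0 = (1 - s) *\<^sub>R \<theta>0 + s *\<^sub>R z0"
        have y0seg: "y0 \<in> closed_segment \<theta>0 z0" using s unfolding y0_def in_segment by blast
        have dy: "dist y y0 < \<epsilon>" unfolding s(3) y0_def by (rule conv_dist_lt[OF s(1) s1 d\<theta> dz])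
        show False
        proof (cases "y0 \<in> ball z0 (\<delta>1/2)")
          case True
          then have "dist z0 y0 < \<delta>1/2" by simp
          moreover have "dist y0 y < \<delta>1/2" using dy by (simp add: \<epsilon>_def dist_commute)
          ultimately have "dist z0 y < \<delta>1" using dist_triangle[of z0 y y0] by linarith
          then have "y \<notin> Pk k" using \<delta>1 by auto
          then have "y \<in> A k" using Fr_near[OF k y(2)] by blast
          then have "norm (y - cc k) = R k" using Ak_dist[OF k] by (simp add: dist_norm)
          moreover have "y - cc k = (z - cc k) + (1 - s) *\<^sub>R (\<theta> - z)" using s(3) by (simp add: algebra_simps)
          moreover have "norm ((z - cc k) + (1 - s) *\<^sub>R (\<theta> - z)) > R k"
            using ray_out[OF nzc _, of "\<theta> - z" "1 - s"] G2 s1 by simp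
          ultimately show False by simp
        next
          case False
          then have "y0 \<in> K" using y0seg unfolding K_def by blast
          then have "\<eta> \<le> dist y0 y" using \<eta>(2) y(2) by blast
          then show False using dy by (simp add: \<epsilon>_def dist_commute)
        qed
      qed
    qed
    have segcell: "closed_segment \<theta> z \<subseteq> cell Gbox L r"
    proof
      fix y assume y: "y \<in> closed_segment \<theta> z"
      have "y \<in> Gbox"
      proof (cases "y = z")
        case True then show ?thesis using zFr Fr_G by blast
      next
        case False
        obtain s where s: "0 \<le> s" "s \<le> 1" "y = (1 - s) *\<^sub>R \<theta> + s *\<^sub>R z" using y in_segment(1) by blast
        have s1: "s < 1" using s False by (cases "s = 1") auto
        have "\<theta> + s *\<^sub>R (z - \<theta>) \<in> interior Gbox"
          by (rule halfseg_interior[OF S_int[OF \<theta>S] nFr s(1) s1])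
        moreover have "\<theta> + s *\<^sub>R (z - \<theta>) = y" using s(3) by (simp add: algebra_simps)
        ultimately show ?thesis using interior_subset by blast
      qed
      moreover have "r \<le> dist cD y" by (rule seg_out(1)[OF \<theta>S G1 y])
      ultimately show "y \<in> cell Gbox L r" unfolding cell_def by auto
    qed
    have segO: "closed_segment \<theta> z \<inter> Opn = {}"
    proof (rule ccontr)
      assume "closed_segment \<theta> z \<inter> Opn \<noteq> {}"
      then obtain y where "y \<in> closed_segment \<theta> z" "y \<in> Opn" by blast
      then have "y = z" using nFr Opn_Fr by blast
      then show False using zP \<open>y \<in> Opn\<close> unfolding Pk_def by blast
    qed
    have segC: "closed_segment \<theta> z \<inter> Cor = {}"
    proof (rule ccontr)
      assume "closed_segment \<theta> z \<inter> Cor \<noteq> {}"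
      then obtain y where "y \<in> closed_segment \<theta> z" "y \<in> Cor" by blast
      then have "y = z" using nFr Cor_Fr by blast
      then show False using zC \<open>y \<in> Cor\<close> by blast
    qed
    have t1: "\<not> tangent_to_disk L r \<theta> z"
    proof
      assume "tangent_to_disk L r \<theta> z"
      then obtain x where x: "x \<in> closed_segment \<theta> z" "dist x cD = r" "(z - \<theta>) \<bullet> (x - cD) = 0"
        unfolding tangent_to_disk_def by blast
      have "x = \<theta>" using seg_out(2)[OF \<theta>S G1 x(1)] x(2) by (auto simp: dist_commute)
      then show False using x(3) G1 by simp
    qed
    have t2: "\<not> tangent_to_disk L r z \<theta>"
    proof
      assume "tangent_to_disk L r z \<theta>"
      then obtain x where x: "x \<in> closed_segment z \<theta>" "dist x cD = r" "(\<theta> - z) \<bullet> (x - cD) = 0"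
        unfolding tangent_to_disk_def by blast
      have x1: "x \<in> closed_segment \<theta> z" using x(1) closed_segment_commute by blast
      have "x = \<theta>" using seg_out(2)[OF \<theta>S G1 x1] x(2) by (auto simp: dist_commute)
      moreover have "(\<theta> - z) \<bullet> (\<theta> - cD) = - ((z - \<theta>) \<bullet> (\<theta> - cD))"
        by (simp add: inner_diff_left)
      ultimately show False using x(3) G1 by simp
    qed
    have "\<theta> \<noteq> z" using \<theta>Fr zFr by blast
    then show "good \<theta> z" unfolding good_def using \<theta>S zFr segcell segO segC t1 t2 by blast
  qed
qed

end

lemma cross_scaleR_right: "cross u (c *\<^sub>R v) = c * cross u v"
  by (simp add: cross_def algebra_simps)
lemma cross_scaleR_left: "cross (c *\<^sub>R u) v = c * cross u v"
  by (simp add: cross_def algebra_simps)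
lemma cross_add_right: "cross u (v + w) = cross u v + cross u w"
  by (simp add: cross_def algebra_simps)
lemma cross_diff_right: "cross u (v - w) = cross u v - cross u w"
  by (simp add: cross_def algebra_simps)
lemma cross_self: "cross u u = 0"
  by (simp add: cross_def algebra_simps)

lemma cross0_parallel:
  fixes n w :: "real \<times> real"
  assumes n: "n \<noteq> 0" and h: "cross n w = 0"
  shows "w = ((w \<bullet> n) / (n \<bullet> n)) *\<^sub>R n"
proof -
  obtain n1 n2 where nn: "n = (n1, n2)" by (cases n)
  obtain w1 w2 where ww: "w = (w1, w2)" by (cases w)
  have h1: "n1 * w2 = n2 * w1" using h by (simp add: cross_def nn ww)
  have "0 < n \<bullet> n" using n by simp
  then have N: "n1 * n1 + n2 * n2 \<noteq> 0" by (auto simp: nn inner_real_def)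
  have e1: "w1 * (n1 * n1 + n2 * n2) = (w1 * n1 + w2 * n2) * n1"
  proof -
    have "w2 * n2 * n1 = n2 * (n1 * w2)" by (simp add: algebra_simps)
    also have "\<dots> = n2 * (n2 * w1)" by (simp only: h1)
    also have "\<dots> = w1 * n2 * n2" by (simp add: algebra_simps)
    finally have X: "w2 * n2 * n1 = w1 * n2 * n2" .
    have "w1 * (n1 * n1 + n2 * n2) = w1 * n1 * n1 + w1 * n2 * n2" by (simp add: algebra_simps)
    also have "\<dots> = w1 * n1 * n1 + w2 * n2 * n1" by (simp only: X)
    also have "\<dots> = (w1 * n1 + w2 * n2) * n1" by (simp add: algebra_simps)
    finally show ?thesis .
  qed
  have e2: "w2 * (n1 * n1 + n2 * n2) = (w1 * n1 + w2 * n2) * n2"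
  proof -
    have "w1 * n1 * n2 = n1 * (n2 * w1)" by (simp add: algebra_simps)
    also have "\<dots> = n1 * (n1 * w2)" by (simp only: h1)
    also have "\<dots> = w2 * n1 * n1" by (simp add: algebra_simps)
    finally have X: "w1 * n1 * n2 = w2 * n1 * n1" .
    have "w2 * (n1 * n1 + n2 * n2) = w2 * n1 * n1 + w2 * n2 * n2" by (simp add: algebra_simps)
    also have "\<dots> = w1 * n1 * n2 + w2 * n2 * n2" by (simp only: X)
    also have "\<dots> = (w1 * n1 + w2 * n2) * n2" by (simp add: algebra_simps)
    finally show ?thesis .
  qed
  have "w1 = (w1 * n1 + w2 * n2) / (n1 * n1 + n2 * n2) * n1"
    using e1 N by (simp add: field_simps)
  moreover have "w2 = (w1 * n1 + w2 * n2) / (n1 * n1 + n2 * n2) * n2"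
    using e2 N by (simp add: field_simps)
  ultimately show ?thesis by (simp add: nn ww)
qed

lemma reflect_from_cross:
  fixes n x1 x2 z :: "real \<times> real"
  assumes n: "n \<noteq> 0" and a1: "x1 \<noteq> z" and a2: "x2 \<noteq> z"
    and p1: "(x1 - z) \<bullet> n > 0" and p2: "(x2 - z) \<bullet> n > 0"
    and F: "cross n (x1 - z) / norm (x1 - z) + cross n (x2 - z) / norm (x2 - z) = 0"
  shows "\<exists>s>0. x2 - z = s *\<^sub>R reflect n (z - x1)"
proof -
  define l1 where "l1 = norm (x1 - z)"
  define l2 where "l2 = norm (x2 - z)"
  have l1p: "l1 > 0" using a1 by (simp add: l1_def)
  have l2p: "l2 > 0" using a2 by (simp add: l2_def)
  define u1 where "u1 = (1 / l1) *\<^sub>R (x1 - z)"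
  define u2 where "u2 = (1 / l2) *\<^sub>R (x2 - z)"
  have x1u: "x1 - z = l1 *\<^sub>R u1" using l1p by (simp add: u1_def)
  have x2u: "x2 - z = l2 *\<^sub>R u2" using l2p by (simp add: u2_def)
  have nu1: "u1 \<bullet> u1 = 1"
  proof -
    have "norm u1 = 1" using l1p by (simp add: u1_def l1_def)
    then show ?thesis by (simp add: dot_square_norm)
  qed
  have nu2: "u2 \<bullet> u2 = 1"
  proof -
    have "norm u2 = 1" using l2p by (simp add: u2_def l2_def)
    then show ?thesis by (simp add: dot_square_norm)
  qed
  have q1: "u1 \<bullet> n > 0" using p1 l1p by (simp add: u1_def)
  have q2: "u2 \<bullet> n > 0" using p2 l2p by (simp add: u2_def)
  have "cross n (u1 + u2) = 0"
    using F by (simp add: u1_def u2_def l1_def l2_def cross_add_right cross_scaleR_right)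
  then have w: "u1 + u2 = (((u1 + u2) \<bullet> n) / (n \<bullet> n)) *\<^sub>R n" by (rule cross0_parallel[OF n])
  define lam where "lam = ((u1 + u2) \<bullet> n) / (n \<bullet> n)"
  have Np: "n \<bullet> n > 0" using n by simp
  have lam: "lam * (n \<bullet> n) = (u1 + u2) \<bullet> n" using Np by (simp add: lam_def)
  have lam0: "lam \<noteq> 0" using lam q1 q2 by (auto simp: inner_add_left)
  have w': "u1 + u2 = lam *\<^sub>R n" using w by (simp only: lam_def)
  have u2e: "u2 = lam *\<^sub>R n - u1" using w' by (metis add_diff_cancel_left')
  have "u2 \<bullet> u2 = lam * lam * (n \<bullet> n) - 2 * lam * (u1 \<bullet> n) + u1 \<bullet> u1"
    unfolding u2e by (simp add: algebra_simps inner_diff_left inner_diff_right inner_commute)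
  then have "lam * lam * (n \<bullet> n) - 2 * lam * (u1 \<bullet> n) = 0" using nu1 nu2 by linarith
  moreover have "lam * (lam * (n \<bullet> n) - 2 * (u1 \<bullet> n)) = lam * lam * (n \<bullet> n) - 2 * lam * (u1 \<bullet> n)"
    by (simp add: algebra_simps)
  ultimately have "lam * (lam * (n \<bullet> n) - 2 * (u1 \<bullet> n)) = 0" by simp
  then have "lam * (n \<bullet> n) - 2 * (u1 \<bullet> n) = 0" using lam0 by simp
  then have lamN: "lam * (n \<bullet> n) = 2 * (u1 \<bullet> n)" by simp
  have "reflect n (z - x1) = (z - x1) - (2 * ((z - x1) \<bullet> n) / (n \<bullet> n)) *\<^sub>R n"
    by (simp add: reflect_def)
  also have "\<dots> = - (l1 *\<^sub>R u1) + (l1 * (2 * (u1 \<bullet> n) / (n \<bullet> n))) *\<^sub>R n"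
  proof -
    have zx: "z - x1 = - (l1 *\<^sub>R u1)" using x1u by (simp add: algebra_simps)
    have ip: "(z - x1) \<bullet> n = - (l1 * (u1 \<bullet> n))" using zx by simp
    have sc: "2 * (- (l1 * (u1 \<bullet> n))) / (n \<bullet> n) = - (l1 * (2 * (u1 \<bullet> n) / (n \<bullet> n)))" by simp
    show ?thesis unfolding ip sc unfolding zx by (simp only: scaleR_minus_left diff_minus_eq_add)
  qed
  also have "\<dots> = l1 *\<^sub>R (lam *\<^sub>R n - u1)"
  proof -
    have "2 * (u1 \<bullet> n) / (n \<bullet> n) = lam" using lamN Np by (simp add: field_simps)
    then show ?thesis by (simp add: algebra_simps)
  qed
  also have "\<dots> = l1 *\<^sub>R u2" using u2e by simp
  finally have "reflect n (z - x1) = l1 *\<^sub>R u2" .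
  then have "x2 - z = (l2 / l1) *\<^sub>R reflect n (z - x1)" using x2u l1p by simp
  then show ?thesis using l1p l2p by (intro exI[of _ "l2 / l1"]) simp
qed

lemma cont_pos:
  fixes f :: "'a::metric_space \<Rightarrow> real"
  assumes "isCont f x0" "f x0 > 0"
  shows "\<exists>e>0. \<forall>x. dist x x0 < e \<longrightarrow> f x > 0"
proof -
  have "eventually (\<lambda>x. f x > 0) (at x0)"
    using order_tendstoD(1)[OF assms(1)[unfolded isCont_def] assms(2)] .
  then obtain d where d: "d > 0" "\<forall>x. x \<noteq> x0 \<and> dist x x0 < d \<longrightarrow> f x > 0"
    unfolding eventually_at by auto
  show ?thesis using d assms(2) by (intro exI[of _ d]) auto
qed

lemma cont_near:
  fixes f :: "'a::metric_space \<Rightarrow> 'b::metric_space"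
  assumes "isCont f x0" "e > 0"
  shows "\<exists>d>0. \<forall>x. dist x x0 < d \<longrightarrow> dist (f x) (f x0) < e"
proof -
  have "isCont (\<lambda>x. e - dist (f x) (f x0)) x0" using assms(1) by (intro continuous_intros) auto
  from cont_pos[OF this] show ?thesis using assms(2) by simp
qed

lemma G_identity:
  fixes p q d1 d2 r t :: real
  assumes "p * p + q * q = 1"
  shows "cross (r *\<^sub>R (cos t *\<^sub>R (p, q) + sin t *\<^sub>R (- q, p)) - (d1, d2)) (r *\<^sub>R (p, q) - (d1, d2))
       = r * (- d1 * q + d2 * p) * (1 - cos t) + r * ((d1 * p + d2 * q) - r) * sin t"
proof -
  have "cross (r *\<^sub>R (cos t *\<^sub>R (p, q) + sin t *\<^sub>R (- q, p)) - (d1, d2)) (r *\<^sub>R (p, q) - (d1, d2))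
     = r * (- d1 * q + d2 * p) * (1 - cos t) + r * (d1 * p + d2 * q) * sin t - r * r * sin t * (p * p + q * q)"
    by (simp add: cross_def algebra_simps)
  then show ?thesis using assms by (simp add: algebra_simps)
qed

lemma unit_rot:
  fixes p q t :: real
  assumes "p * p + q * q = 1"
  shows "norm (cos t *\<^sub>R (p, q) + sin t *\<^sub>R (- q, p)) = 1"
proof -
  have "(cos t * p - sin t * q)^2 + (cos t * q + sin t * p)^2 = ((sin t)^2 + (cos t)^2) * (p * p + q * q)"
    unfolding power2_eq_square by algebra
  then have "(cos t * p - sin t * q)^2 + (cos t * q + sin t * p)^2 = 1" using assms by simp
  then show ?thesis by (simp add: norm_Pair)
qed

lemma zf_cont: "x \<noteq> C \<Longrightarrow> isCont (zf C Rr) x"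
  unfolding zf_def by (intro continuous_intros) auto

lemma fz_cont1: "\<theta> \<noteq> z \<Longrightarrow> isCont (\<lambda>z. cross (z - C) (\<theta> - z) / norm (\<theta> - z)) z"
  unfolding cross_def by (intro continuous_intros) auto

lemma fz_cont2: "\<theta> \<noteq> z \<Longrightarrow> isCont (\<lambda>\<theta>. cross (z - C) (\<theta> - z) / norm (\<theta> - z)) \<theta>"
  unfolding cross_def by (intro continuous_intros) auto

lemma small_angle:
  fixes \<delta> \<alpha> \<beta> r :: real
  assumes d0: "0 < \<delta>" and d1: "\<delta> \<le> 1/2" and dab: "\<delta> * (\<bar>\<beta>\<bar> + 1) < \<alpha> - r" and r: "r > 0"
  shows "r * \<beta> * (1 - cos \<delta>) + r * (\<alpha> - r) * sin \<delta> > 0"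
    and "r * \<beta> * (1 - cos (- \<delta>)) + r * (\<alpha> - r) * sin (- \<delta>) < 0"
proof -
  have pi2: "\<delta> < pi / 2" using d1 pi_ge_two by linarith
  have sp: "sin \<delta> > 0" using d0 pi2 by (intro sin_gt_zero) auto
  have sl: "sin \<delta> \<le> \<delta>" using sin_x_le_x d0 by simp
  have cp: "cos \<delta> > 0" using d0 pi2 by (intro cos_gt_zero) auto
  have c1: "cos \<delta> \<le> 1" by simp
  have "(sin \<delta>)^2 = (1 - cos \<delta>) * (1 + cos \<delta>)"
    using sin_cos_squared_add[of \<delta>] by (simp add: power2_eq_square algebra_simps)
  moreover have "(1 - cos \<delta>) * (1 + cos \<delta>) \<ge> (1 - cos \<delta>) * 1"
    using c1 cp by (intro mult_left_mono) auto
  ultimately have oc: "1 - cos \<delta> \<le> sin \<delta> * sin \<delta>" by (simp add: power2_eq_square)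
  have ab: "\<alpha> - r > 0" using dab d0 by (smt (verit) mult_nonneg_nonneg abs_ge_zero)
  have "\<bar>\<beta>\<bar> * \<delta> < \<alpha> - r" using dab d0 by (simp add: algebra_simps)
  then have "\<bar>\<beta>\<bar> * sin \<delta> < \<alpha> - r" using sl by (smt (verit) abs_ge_zero mult_left_mono)
  then have "\<bar>\<beta>\<bar> * sin \<delta> * sin \<delta> < (\<alpha> - r) * sin \<delta>" using sp by simp
  moreover have "\<bar>\<beta> * (1 - cos \<delta>)\<bar> \<le> \<bar>\<beta>\<bar> * sin \<delta> * sin \<delta>"
  proof -
    have "\<bar>\<beta> * (1 - cos \<delta>)\<bar> = \<bar>\<beta>\<bar> * (1 - cos \<delta>)" using c1 by (simp add: abs_mult)
    also have "\<dots> \<le> \<bar>\<beta>\<bar> * (sin \<delta> * sin \<delta>)" using oc by (intro mult_left_mono) auto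
    finally show ?thesis by (simp add: mult.assoc)
  qed
  ultimately have A: "\<bar>\<beta> * (1 - cos \<delta>)\<bar> < (\<alpha> - r) * sin \<delta>" by linarith
  have "\<beta> * (1 - cos \<delta>) + (\<alpha> - r) * sin \<delta> > 0" using A by linarith
  then have "r * (\<beta> * (1 - cos \<delta>) + (\<alpha> - r) * sin \<delta>) > 0" using r by simp
  then show "r * \<beta> * (1 - cos \<delta>) + r * (\<alpha> - r) * sin \<delta> > 0" by (simp add: algebra_simps)
  have "\<beta> * (1 - cos \<delta>) - (\<alpha> - r) * sin \<delta> < 0" using A by linarith
  then have "r * (\<beta> * (1 - cos \<delta>) - (\<alpha> - r) * sin \<delta>) < 0" using r by (simp add: mult_pos_neg)
  then show "r * \<beta> * (1 - cos (- \<delta>)) + r * (\<alpha> - r) * sin (- \<delta>) < 0" by (simp add: algebra_simps)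
qed

context cellctx
begin

definition bounce :: "real \<times> real \<Rightarrow> real \<times> real \<Rightarrow> bool" where
  "bounce \<theta>1 \<theta>2 \<longleftrightarrow> (\<exists>k z. k \<in> {1..b} \<and> z \<in> A k \<and> good \<theta>1 z \<and> good \<theta>2 z \<and>
     (\<exists>s>0. \<theta>2 - z = s *\<^sub>R reflect (z - cc k) (z - \<theta>1)))"

lemma local_reach:
  assumes oc: "one_controllable L a r b cc A Gbox" and \<theta>0S: "\<theta>0 \<in> S"
  shows "\<exists>\<epsilon>>0. \<forall>\<theta>2\<in>S. dist \<theta>2 \<theta>0 < \<epsilon> \<longrightarrow> bounce \<theta>0 \<theta>2"
proof -
  have "\<theta>0 \<in> (\<Union>k\<in>{1..b}. illuminated L a r b cc A Gbox k)"
    using oc \<theta>0S unfolding one_controllable_def by simp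
  then obtain k where k: "k \<in> {1..b}" and "\<theta>0 \<in> illuminated L a r b cc A Gbox k" by blast
  then obtain U where U: "openin (top_of_set S) U" "U \<subseteq> return_set L a r b cc A Gbox k" "\<theta>0 \<in> U"
    unfolding illuminated_def Let_def by blast
  obtain \<rho> where \<rho>: "\<rho> > 0" "\<forall>x\<in>S. dist x \<theta>0 < \<rho> \<longrightarrow> x \<in> U"
    using U(1) U(3) unfolding openin_euclidean_subtopology_iff by blast
  have Rk: "R k > 0" using Rpos k .
  define e0 where "e0 = (1/r) *\<^sub>R (\<theta>0 - cD)"
  obtain p q where pq: "e0 = (p, q)" by (cases e0)
  have th0e: "\<theta>0 - cD = r *\<^sub>R e0" using r_pos by (simp add: e0_def)
  have "norm e0 = 1" using \<theta>0S r_pos by (simp add: e0_def dist_norm norm_minus_commute)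
  then have "e0 \<bullet> e0 = 1" by (simp add: dot_square_norm)
  then have pq1: "p * p + q * q = 1" by (simp add: pq inner_real_def)
  define ep where "ep = (- q, p)"
  define uu where "uu t = cos t *\<^sub>R e0 + sin t *\<^sub>R ep" for t
  have uu1: "norm (uu t) = 1" for t unfolding uu_def pq ep_def by (rule unit_rot[OF pq1])
  have uuu: "uu t \<bullet> uu t = 1" for t using uu1[of t] by (simp add: dot_square_norm)
  define th where "th t = cD + r *\<^sub>R uu t" for t
  have thS: "th t \<in> S" for t using uu1[of t] r_pos by (simp add: th_def dist_norm)
  have th0: "th 0 = \<theta>0" using th0e by (simp add: th_def uu_def algebra_simps)
  have thc: "isCont th t" for t unfolding th_def uu_def by (intro continuous_intros)
  obtain \<rho>1 where \<rho>1: "\<rho>1 > 0" "\<forall>t. dist t 0 < \<rho>1 \<longrightarrow> dist (th t) (th 0) < \<rho>"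
    using cont_near[OF thc \<rho>(1)] by blast
  have RS: "th t \<in> return_set L a r b cc A Gbox k" if "\<bar>t\<bar> < \<rho>1" for t
    using \<rho>1(2) that \<rho>(2) thS[of t] U(2) th0 by (auto simp: dist_real_def)
  define dd where "dd = cc k - cD"
  define \<alpha> where "\<alpha> = dd \<bullet> e0"
  define \<beta> where "\<beta> = dd \<bullet> ep"
  have key: "(cc k - th t) \<bullet> (th t - cD) = r * (\<alpha> * cos t + \<beta> * sin t) - r * r" for t
  proof -
    have "cc k - th t = dd - r *\<^sub>R uu t" by (simp add: dd_def th_def)
    moreover have "th t - cD = r *\<^sub>R uu t" by (simp add: th_def)
    ultimately have "(cc k - th t) \<bullet> (th t - cD) = r * (dd \<bullet> uu t) - r * r * (uu t \<bullet> uu t)"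
      by (simp add: inner_diff_left algebra_simps)
    moreover have "dd \<bullet> uu t = \<alpha> * cos t + \<beta> * sin t"
      by (simp add: uu_def \<alpha>_def \<beta>_def inner_add_right algebra_simps)
    ultimately show ?thesis using uuu by simp
  qed
  have ge: "\<alpha> * cos t + \<beta> * sin t \<ge> r" if "\<bar>t\<bar> < \<rho>1" for t
  proof -
    have "(cc k - th t) \<bullet> (th t - cD) \<ge> 0" using ret_facts(7)[OF k RS[OF that]] .
    then have "r * (\<alpha> * cos t + \<beta> * sin t) - r * r \<ge> 0" using key by simp
    then have "r * (\<alpha> * cos t + \<beta> * sin t - r) \<ge> 0" by (simp add: algebra_simps)
    then show ?thesis using r_pos by (simp add: zero_le_mult_iff)
  qed
  have ar: "\<alpha> > r"
  proof -
    have "\<alpha> \<ge> r" using ge[of 0] \<rho>1(1) by simp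
    moreover have "\<alpha> \<noteq> r"
    proof
      assume ar: "\<alpha> = r"
      define t where "t = min (\<rho>1/2) 1"
      have t0: "0 < t" "t < \<rho>1" "t \<le> 1" using \<rho>1(1) by (auto simp: t_def)
      have "r * cos t + \<beta> * sin t \<ge> r" using ge[of t] t0 ar by simp
      moreover have "r * cos t - \<beta> * sin t \<ge> r" using ge[of "-t"] t0 ar by simp
      ultimately have "r * cos t \<ge> r" by linarith
      then have "cos t \<ge> 1" using r_pos by simp
      moreover have "cos t < cos 0" using t0 pi_ge_two by (intro cos_monotone_0_pi) auto
      ultimately show False by simp
    qed
    ultimately show ?thesis by simp
  qed
  have RS0: "\<theta>0 \<in> return_set L a r b cc A Gbox k" using U by blast
  define z0 where "z0 = zf (cc k) (R k) \<theta>0"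
  note F0 = ret_facts[OF k RS0, folded z0_def]
  define N0 where "N0 = norm (\<theta>0 - cc k)"
  have N0R: "R k < N0" using F0(2) by (simp add: N0_def)
  have z0e: "z0 - cc k = (R k / N0) *\<^sub>R (\<theta>0 - cc k)" by (simp add: z0_def zf_def N0_def)
  have z0t: "z0 - \<theta>0 = (1 - R k / N0) *\<^sub>R (cc k - \<theta>0)"
  proof -
    have "z0 - \<theta>0 = (z0 - cc k) - (\<theta>0 - cc k)" by simp
    also have "\<dots> = (R k / N0) *\<^sub>R (\<theta>0 - cc k) - (\<theta>0 - cc k)" using z0e by simp
    also have "\<dots> = (1 - R k / N0) *\<^sub>R (cc k - \<theta>0)" by (simp add: algebra_simps)
    finally show ?thesis .
  qed
  have lam0: "1 - R k / N0 > 0" using N0R Rk by simp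
  have g1: "(z0 - \<theta>0) \<bullet> (\<theta>0 - cD) > 0"
  proof -
    have "(cc k - \<theta>0) \<bullet> (\<theta>0 - cD) = r * \<alpha> - r * r" using key[of 0] th0 by simp
    also have "\<dots> = r * (\<alpha> - r)" by (simp add: algebra_simps)
    finally have "(cc k - \<theta>0) \<bullet> (\<theta>0 - cD) > 0" using ar r_pos by simp
    then show ?thesis using z0t lam0 by simp
  qed
  have g2: "(\<theta>0 - z0) \<bullet> (z0 - cc k) > 0"
  proof -
    have "\<theta>0 - z0 = (1 - R k / N0) *\<^sub>R (\<theta>0 - cc k)" using z0t by (simp add: algebra_simps)
    then have eq: "(\<theta>0 - z0) \<bullet> (z0 - cc k) = (1 - R k / N0) * (R k / N0) * ((\<theta>0 - cc k) \<bullet> (\<theta>0 - cc k))"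
      using z0e by simp
    have C: "(\<theta>0 - cc k) \<bullet> (\<theta>0 - cc k) > 0" using N0R Rk N0_def by auto
    have B: "R k / N0 > 0" using N0R Rk by simp
    have "(1 - R k / N0) * (R k / N0) * ((\<theta>0 - cc k) \<bullet> (\<theta>0 - cc k)) > 0"
      using lam0 B C by (intro mult_pos_pos)
    then show ?thesis unfolding eq .
  qed
  have fr0: "\<forall>y\<in>closed_segment \<theta>0 z0. y \<in> Fr \<longrightarrow> y = z0"
  proof (intro ballI impI)
    fix y assume y: "y \<in> closed_segment \<theta>0 z0" "y \<in> Fr"
    have "y \<notin> open_segment \<theta>0 z0" using F0(6) y(2) unfolding cell_boundary_def by blast
    moreover have "y \<noteq> \<theta>0" using y(2) S_notFr \<theta>0S by blast
    ultimately show "y = z0" using y(1) unfolding closed_segment_eq_open by blast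
  qed
  obtain \<epsilon>v where \<epsilon>v: "\<epsilon>v > 0" "\<forall>\<theta> z. \<theta> \<in> S \<longrightarrow> z \<in> A k \<longrightarrow> dist \<theta> \<theta>0 < \<epsilon>v \<longrightarrow> dist z z0 < \<epsilon>v \<longrightarrow>
            good \<theta> z \<and> (\<theta> - z) \<bullet> (z - cc k) > 0"
    using seg_valid_near[OF k \<theta>0S F0(3) F0(4) fr0 g1 g2] by blast
  define zt where "zt t = zf (cc k) (R k) (th t)" for t
  have ztc: "isCont zt t" if "th t \<noteq> cc k" for t
    unfolding zt_def using isCont_o2[OF thc zf_cont[OF that]] .
  have th0c: "th 0 \<noteq> cc k" using N0R Rk th0 N0_def by auto
  have zt0: "zt 0 = z0" by (simp add: zt_def th0 z0_def)
  obtain \<rho>2 where \<rho>2: "\<rho>2 > 0" "\<forall>t. dist t 0 < \<rho>2 \<longrightarrow> dist (zt t) (zt 0) < \<epsilon>v"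
    using cont_near[OF ztc[OF th0c] \<epsilon>v(1)] by blast
  define \<delta> where "\<delta> = min (min (\<rho>1/2) (\<rho>2/2)) (min (1/2) ((\<alpha> - r) / (\<bar>\<beta>\<bar> + 1) / 2))"
  have \<delta>0: "\<delta> > 0" using \<rho>1 \<rho>2 ar by (simp add: \<delta>_def)
  have \<delta>1: "\<delta> < \<rho>1" "\<delta> < \<rho>2" "\<delta> \<le> 1/2" using \<rho>1(1) \<rho>2(1) unfolding \<delta>_def by linarith+
  have "\<delta> \<le> (\<alpha> - r) / (\<bar>\<beta>\<bar> + 1) / 2" by (simp add: \<delta>_def)
  then have \<delta>2: "\<delta> * (\<bar>\<beta>\<bar> + 1) < \<alpha> - r" using ar
    by (simp add: field_simps)
  have inr: "\<bar>t\<bar> < \<rho>1" "\<bar>t\<bar> < \<rho>2" if "\<bar>t\<bar> \<le> \<delta>" for t using that \<delta>1 by auto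
  have Ft: "zt t \<in> A k" "R k < norm (th t - cc k)" "dist (zt t) z0 < \<epsilon>v" if "\<bar>t\<bar> \<le> \<delta>" for t
  proof -
    show "zt t \<in> A k" using ret_facts(3)[OF k RS[OF inr(1)[OF that]]] by (simp add: zt_def)
    show "R k < norm (th t - cc k)" using ret_facts(2)[OF k RS[OF inr(1)[OF that]]] .
    show "dist (zt t) z0 < \<epsilon>v" using \<rho>2(2) inr(2)[OF that] zt0 by (simp add: dist_real_def)
  qed
  have ztS: "\<theta> \<noteq> zt t" if "\<theta> \<in> S" "\<bar>t\<bar> \<le> \<delta>" for \<theta> t
    using Ak_Fr[OF k] Ft(1)[OF that(2)] S_notFr[OF that(1)] by blast
  define f where "f \<theta> t = cross (zt t - cc k) (\<theta> - zt t) / norm (\<theta> - zt t)" for \<theta> t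
  have fsign: "f \<theta>0 t = (R k / norm (th t - cc k)) / norm (\<theta>0 - zt t) * cross (th t - cc k) (\<theta>0 - cc k)"
    if "\<bar>t\<bar> \<le> \<delta>" for t
  proof -
    have zte: "zt t - cc k = (R k / norm (th t - cc k)) *\<^sub>R (th t - cc k)" by (simp add: zt_def zf_def)
    have e: "\<theta>0 - zt t = (\<theta>0 - cc k) - (zt t - cc k)" by simp
    have "cross (zt t - cc k) (\<theta>0 - zt t) = cross (zt t - cc k) (\<theta>0 - cc k) - cross (zt t - cc k) (zt t - cc k)"
      unfolding e by (rule cross_diff_right)
    also have "\<dots> = cross (zt t - cc k) (\<theta>0 - cc k)" by (simp add: cross_self)
    also have "\<dots> = (R k / norm (th t - cc k)) * cross (th t - cc k) (\<theta>0 - cc k)"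
      by (simp add: zte cross_scaleR_left)
    finally show ?thesis by (simp add: f_def)
  qed
  have Gid: "cross (th t - cc k) (\<theta>0 - cc k) = r * \<beta> * (1 - cos t) + r * (\<alpha> - r) * sin t" for t
  proof -
    obtain d1 d2 where dd12: "dd = (d1, d2)" by (cases dd)
    have "th t - cc k = r *\<^sub>R (cos t *\<^sub>R (p, q) + sin t *\<^sub>R (- q, p)) - (d1, d2)"
      by (simp add: th_def uu_def pq ep_def dd12[symmetric] dd_def)
    moreover have "\<theta>0 - cc k = r *\<^sub>R (p, q) - (d1, d2)"
      using th0e by (simp add: pq dd12[symmetric] dd_def algebra_simps)
    moreover have "\<alpha> = d1 * p + d2 * q" "\<beta> = - d1 * q + d2 * p"
      by (simp_all add: \<alpha>_def \<beta>_def dd12 pq ep_def inner_real_def)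
    ultimately show ?thesis using G_identity[OF pq1, of r t d1 d2] by simp
  qed
  have posfac: "(R k / norm (th t - cc k)) / norm (\<theta>0 - zt t) > 0" if "\<bar>t\<bar> \<le> \<delta>" for t
  proof -
    have "norm (th t - cc k) > 0" using Rk Ft(2)[OF that] by linarith
    moreover have "norm (\<theta>0 - zt t) > 0" using ztS[OF \<theta>0S that] by simp
    ultimately show ?thesis using Rk by (intro divide_pos_pos) auto
  qed
  have d\<delta>: "\<bar>\<delta>\<bar> \<le> \<delta>" "\<bar>-\<delta>\<bar> \<le> \<delta>" using \<delta>0 by auto
  have fp: "f \<theta>0 \<delta> > 0"
  proof -
    have G: "r * \<beta> * (1 - cos \<delta>) + r * (\<alpha> - r) * sin \<delta> > 0"
      using small_angle(1)[OF \<delta>0 \<delta>1(3) \<delta>2 r_pos] .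
    have e: "f \<theta>0 \<delta> = ((R k / norm (th \<delta> - cc k)) / norm (\<theta>0 - zt \<delta>)) *
        (r * \<beta> * (1 - cos \<delta>) + r * (\<alpha> - r) * sin \<delta>)"
      using fsign[OF d\<delta>(1)] Gid[of \<delta>] by simp
    show ?thesis unfolding e using posfac[OF d\<delta>(1)] G by (rule mult_pos_pos)
  qed
  have fn: "f \<theta>0 (-\<delta>) < 0"
  proof -
    have G: "r * \<beta> * (1 - cos (-\<delta>)) + r * (\<alpha> - r) * sin (-\<delta>) < 0"
      using small_angle(2)[OF \<delta>0 \<delta>1(3) \<delta>2 r_pos] .
    have e: "f \<theta>0 (-\<delta>) = ((R k / norm (th (-\<delta>) - cc k)) / norm (\<theta>0 - zt (-\<delta>))) *
        (r * \<beta> * (1 - cos (-\<delta>)) + r * (\<alpha> - r) * sin (-\<delta>))"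
      using fsign[OF d\<delta>(2)] Gid[of "-\<delta>"] by simp
    show ?thesis unfolding e using posfac[OF d\<delta>(2)] G by (rule mult_pos_neg)
  qed
  have fc1: "isCont (\<lambda>\<theta>. f \<theta> \<delta>) \<theta>0" unfolding f_def by (rule fz_cont2[OF ztS[OF \<theta>0S d\<delta>(1)]])
  have fc2: "isCont (\<lambda>\<theta>. - f \<theta> (-\<delta>)) \<theta>0"
    unfolding f_def by (intro continuous_intros fz_cont2[OF ztS[OF \<theta>0S d\<delta>(2)]])
  obtain \<epsilon>p where \<epsilon>p: "\<epsilon>p > 0" "\<forall>\<theta>. dist \<theta> \<theta>0 < \<epsilon>p \<longrightarrow> f \<theta> \<delta> > 0"
    using cont_pos[OF fc1 fp] by blast
  obtain \<epsilon>n where \<epsilon>n: "\<epsilon>n > 0" "\<forall>\<theta>. dist \<theta> \<theta>0 < \<epsilon>n \<longrightarrow> - f \<theta> (-\<delta>) > 0"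
    using cont_pos[OF fc2] fn by force
  define \<epsilon> where "\<epsilon> = min \<epsilon>v (min \<epsilon>p \<epsilon>n)"
  show ?thesis
  proof (intro exI[of _ \<epsilon>] conjI ballI impI)
    show "\<epsilon> > 0" using \<epsilon>v \<epsilon>p \<epsilon>n by (simp add: \<epsilon>_def)
    fix \<theta>2 assume \<theta>2S: "\<theta>2 \<in> S" and d2: "dist \<theta>2 \<theta>0 < \<epsilon>"
    define F where "F t = f \<theta>0 t + f \<theta>2 t" for t
    have dd2: "dist \<theta>2 \<theta>0 < \<epsilon>p" "dist \<theta>2 \<theta>0 < \<epsilon>n" "dist \<theta>2 \<theta>0 < \<epsilon>v"
      using d2 by (simp_all add: \<epsilon>_def)
    have "f \<theta>2 \<delta> > 0" using \<epsilon>p(2) dd2(1) by blast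
    then have Fp: "F \<delta> > 0" using fp by (simp add: F_def)
    have "- f \<theta>2 (-\<delta>) > 0" using \<epsilon>n(2) dd2(2) by blast
    then have Fn: "F (-\<delta>) < 0" using fn by (simp add: F_def)
    have Fc: "continuous_on {-\<delta>..\<delta>} F"
    proof (rule continuous_at_imp_continuous_on, rule ballI)
      fix t assume "t \<in> {-\<delta>..\<delta>}"
      then have t: "\<bar>t\<bar> \<le> \<delta>" by auto
      have tc: "th t \<noteq> cc k" using Ft(2)[OF t] Rk by auto
      have c1: "isCont (\<lambda>t. f \<theta>0 t) t"
        unfolding f_def using isCont_o2[OF ztc[OF tc] fz_cont1[OF ztS[OF \<theta>0S t]]] .
      have c2: "isCont (\<lambda>t. f \<theta>2 t) t"
        unfolding f_def using isCont_o2[OF ztc[OF tc] fz_cont1[OF ztS[OF \<theta>2S t]]] .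
      show "isCont F t" unfolding F_def using c1 c2 by (intro continuous_intros)
    qed
    obtain t where t: "-\<delta> \<le> t" "t \<le> \<delta>" "F t = 0"
      using IVT'[of F "-\<delta>" 0 \<delta>, OF _ _ _ Fc] Fp Fn \<delta>0 by force
    have ta: "\<bar>t\<bar> \<le> \<delta>" using t by auto
    define z where "z = zt t"
    have zA: "z \<in> A k" using Ft(1)[OF ta] by (simp add: z_def)
    have dz: "dist z z0 < \<epsilon>v" using Ft(3)[OF ta] by (simp add: z_def)
    have "dist \<theta>0 \<theta>0 < \<epsilon>v" using \<epsilon>v(1) by simp
    then have gd0: "good \<theta>0 z" "(\<theta>0 - z) \<bullet> (z - cc k) > 0" using \<epsilon>v(2) \<theta>0S zA dz by blast+
    have gd2: "good \<theta>2 z" "(\<theta>2 - z) \<bullet> (z - cc k) > 0" using \<epsilon>v(2) \<theta>2S zA dz dd2(3)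
      by blast+
    have n0: "z - cc k \<noteq> 0" using Ak_dist[OF k zA] Rk by (auto simp: dist_norm)
    have "cross (z - cc k) (\<theta>0 - z) / norm (\<theta>0 - z) + cross (z - cc k) (\<theta>2 - z) / norm (\<theta>2 - z) = 0"
      using t(3) by (simp add: F_def f_def z_def)
    then have Feq: "cross (z - cc k) (\<theta>0 - z) / norm (\<theta>0 - z) + cross (z - cc k) (\<theta>2 - z) / norm (\<theta>2 - z) = 0" .
    have a1: "\<theta>0 \<noteq> z" using ztS[OF \<theta>0S ta] by (simp add: z_def)
    have a2: "\<theta>2 \<noteq> z" using ztS[OF \<theta>2S ta] by (simp add: z_def)
    obtain s where "s > 0" "\<theta>2 - z = s *\<^sub>R reflect (z - cc k) (z - \<theta>0)"
      using reflect_from_cross[OF n0 a1 a2 gd0(2) gd2(2) Feq] by blast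
    then show "bounce \<theta>0 \<theta>2" unfolding bounce_def using k zA gd0(1) gd2(1) by blast
  qed
qed

end

lemma cos1_gap:
  assumes "cos t1 = 1" "cos t2 = 1" "t1 < t2" "t2 - t1 < 2 * pi"
  shows False
proof -
  obtain n1 :: int where n1: "t1 = real_of_int n1 * 2 * pi" using assms(1) cos_one_2pi_int by blast
  obtain n2 :: int where n2: "t2 = real_of_int n2 * 2 * pi" using assms(2) cos_one_2pi_int by blast
  have "0 < real_of_int (n2 - n1) * (2 * pi)" using assms(3) n1 n2 by (simp add: algebra_simps)
  then have a: "0 < n2 - n1" by (simp add: zero_less_mult_iff)
  have "real_of_int (n2 - n1) * (2 * pi) < 1 * (2 * pi)" using assms(4) n1 n2 by (simp add: algebra_simps)
  then have "real_of_int (n2 - n1) < 1" by (simp only: mult_less_cancel_right) simp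
  then have "n2 - n1 < 1" by simp
  then show False using a by simp
qed

lemma le_dist_sq:
  fixes x1 y1 x2 y2 :: real
  assumes "0 \<le> R" "R \<le> dist (x1, y1) (x2, y2)"
  shows "R * R \<le> (x1 - x2) * (x1 - x2) + (y1 - y2) * (y1 - y2)"
proof -
  have "R * R \<le> dist (x1, y1) (x2, y2) * dist (x1, y1) (x2, y2)"
    using assms by (intro mult_mono) auto
  also have "\<dots> = (x1 - x2) * (x1 - x2) + (y1 - y2) * (y1 - y2)"
    by (simp add: dist_Pair_Pair dist_real_def power2_eq_square[symmetric])
  finally show ?thesis .
qed

lemma dist_sq_eq:
  fixes x1 y1 x2 y2 :: real
  assumes "dist (x1, y1) (x2, y2) = R"
  shows "R * R = (x1 - x2) * (x1 - x2) + (y1 - y2) * (y1 - y2)"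
proof -
  have "R * R = dist (x1, y1) (x2, y2) * dist (x1, y1) (x2, y2)" using assms by simp
  also have "\<dots> = (x1 - x2) * (x1 - x2) + (y1 - y2) * (y1 - y2)"
    by (simp add: dist_Pair_Pair dist_real_def power2_eq_square[symmetric])
  finally show ?thesis .
qed

context cellctx
begin

lemma cD_eq: "cD = (L/2, 0)" by (simp add: disk_center_def)

lemma O_Fr: "(0, 0) \<in> Fr" using Opn_Fr a_pos unfolding opening_L_def by auto
lemma LO_Fr: "(L, 0) \<in> Fr" using Opn_Fr a_pos unfolding opening_R_def by auto

lemma segL: assumes "0 < t" "t \<le> L/2" shows "(t, 0) \<in> interior Gbox"
proof -
  have fr: "\<forall>y\<in>closed_segment cD (0, 0). y \<in> Fr \<longrightarrow> y = (0, 0)" using star[OF O_Fr] by blast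
  define s where "s = 1 - 2 * t / L"
  have s: "0 \<le> s" "s < 1" using assms L_pos by (auto simp: s_def field_simps)
  have "cD + s *\<^sub>R ((0, 0) - cD) \<in> interior Gbox" by (rule halfseg_interior[OF cD_int fr s])
  moreover have "cD + s *\<^sub>R ((0, 0) - cD) = (t, 0)" using L_pos by (simp add: cD_eq s_def field_simps)
  ultimately show ?thesis by simp
qed

lemma segR: assumes "L/2 \<le> t" "t < L" shows "(t, 0) \<in> interior Gbox"
proof -
  have fr: "\<forall>y\<in>closed_segment cD (L, 0). y \<in> Fr \<longrightarrow> y = (L, 0)" using star[OF LO_Fr] by blast
  define s where "s = 2 * t / L - 1"
  have s: "0 \<le> s" "s < 1" using assms L_pos by (auto simp: s_def field_simps)
  have "cD + s *\<^sub>R ((L, 0) - cD) \<in> interior Gbox" by (rule halfseg_interior[OF cD_int fr s])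
  moreover have "cD + s *\<^sub>R ((L, 0) - cD) = (t, 0)" using L_pos by (simp add: cD_eq s_def field_simps)
  ultimately show ?thesis by simp
qed

lemma arc_cos:
  assumes k: "k \<in> {1..b}"
  obtains t1 t2 where "t1 < t2" "t2 - t1 < 2 * pi"
    "\<And>s. s \<in> {t1..t2} \<Longrightarrow> (fst (cc k) + R k * cos s, snd (cc k) + R k * sin s) \<in> Gbox"
proof -
  obtain t1 t2 where t: "t1 < t2" "t2 - t1 < 2 * pi" "A k = (\<lambda>t. cc k + R k *\<^sub>R (cos t, sin t)) ` {t1..t2}"
    using arc[OF k] by blast
  have "(fst (cc k) + R k * cos s, snd (cc k) + R k * sin s) \<in> Gbox" if "s \<in> {t1..t2}" for s
  proof -
    have "cc k + R k *\<^sub>R (cos s, sin s) \<in> A k" using t(3) that by blast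
    then have "cc k + R k *\<^sub>R (cos s, sin s) \<in> Gbox" using Ak_Fr[OF k] Fr_G by blast
    then show ?thesis by (cases "cc k") simp
  qed
  then show ?thesis using that t by blast
qed

lemma O_notAk: assumes k: "k \<in> {1..b}" shows "(0, 0) \<notin> A k"
proof
  assume O: "(0, 0) \<in> A k"
  obtain u v where uv: "cc k = (u, v)" by (cases "cc k")
  have Rk: "R k > 0" using Rpos k .
  have d: "R k * R k = u * u + v * v" using dist_sq_eq[of 0 0 u v "R k"] Ak_dist[OF k O] uv by simp
  obtain e where e: "e > 0" "\<forall>w\<in>Gbox. dist w (0, 0) < e \<longrightarrow> R k \<le> dist w (cc k)"
    using arc[OF k] O by blast
  have v0: "v = 0"
  proof (rule ccontr)
    assume v: "v \<noteq> 0"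
    define y0 where "y0 = min (min e a) \<bar>v\<bar> / 2"
    have y0: "0 < y0" "y0 < e" "y0 \<le> a" "y0 \<le> \<bar>v\<bar> / 2" using e a_pos v by (auto simp: y0_def)
    define y where "y = (if v > 0 then y0 else - y0)"
    have "(0, y) \<in> opening_L a" using y0 unfolding opening_L_def y_def by auto
    then have wG: "(0, y) \<in> Gbox" using Opn_Fr Fr_G by blast
    have "dist (0::real, y) (0, 0) < e" using y0 by (simp add: dist_Pair_Pair dist_real_def y_def)
    then have "R k \<le> dist (0, y) (u, v)" using e(2) wG uv by auto
    from le_dist_sq[OF less_imp_le[OF Rk] this] have "R k * R k \<le> (0 - u) * (0 - u) + (y - v) * (y - v)" .
    then have "2 * (y * v) \<le> y * y" using d by (simp add: algebra_simps)
    moreover have "y * v = y0 * \<bar>v\<bar>" "y * y = y0 * y0" by (auto simp: y_def)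
    ultimately have "2 * (y0 * \<bar>v\<bar>) \<le> y0 * y0" by simp
    then have "2 * \<bar>v\<bar> \<le> y0" using y0(1) by (simp add: algebra_simps)
    then show False using y0(4) v by simp
  qed
  have u0: "u \<le> 0"
  proof (rule ccontr)
    assume u: "\<not> u \<le> 0"
    define t0 where "t0 = min (min e (L/2)) u / 2"
    have t0: "0 < t0" "t0 < e" "t0 \<le> L/2" "t0 \<le> u / 2" using e L_pos u by (auto simp: t0_def)
    have wG: "(t0, 0) \<in> Gbox" using segL[OF t0(1) t0(3)] interior_subset by blast
    have "dist (t0, 0::real) (0, 0) < e" using t0 by (simp add: dist_Pair_Pair dist_real_def)
    then have "R k \<le> dist (t0, 0) (u, v)" using e(2) wG uv by auto
    from le_dist_sq[OF less_imp_le[OF Rk] this] have "R k * R k \<le> (t0 - u) * (t0 - u) + (0 - v) * (0 - v)" .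
    then have "2 * (t0 * u) \<le> t0 * t0" using d by (simp add: algebra_simps)
    then have "2 * u \<le> t0" using t0(1) by (simp add: algebra_simps)
    then show False using t0(4) u by simp
  qed
  have ue: "u = - R k"
  proof -
    have "u * u = R k * R k" using d v0 by simp
    moreover have "(u + R k) * (u - R k) = u * u - R k * R k" by (simp add: algebra_simps)
    ultimately have "(u + R k) * (u - R k) = 0" by simp
    then have "u + R k = 0 \<or> u - R k = 0" by simp
    then show ?thesis using u0 Rk by auto
  qed
  obtain t1 t2 where t: "t1 < t2" "t2 - t1 < 2 * pi"
    "\<And>s. s \<in> {t1..t2} \<Longrightarrow> (fst (cc k) + R k * cos s, snd (cc k) + R k * sin s) \<in> Gbox"
    using arc_cos[OF k] by blast
  have c1: "cos s = 1" if "s \<in> {t1..t2}" for s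
  proof -
    have "0 \<le> fst (cc k) + R k * cos s" using xrange t(3)[OF that] by blast
    then have "0 \<le> R k * (cos s - 1)" using uv ue by (simp add: algebra_simps)
    then have "cos s \<ge> 1" using Rk by (simp add: zero_le_mult_iff)
    then show ?thesis using cos_le_one[of s] by linarith
  qed
  show False using cos1_gap[OF c1 c1 t(1) t(2)] t(1) by auto
qed

lemma LO_notAk: assumes k: "k \<in> {1..b}" shows "(L, 0) \<notin> A k"
proof
  assume O: "(L, 0) \<in> A k"
  obtain u v where uv: "cc k = (u, v)" by (cases "cc k")
  have Rk: "R k > 0" using Rpos k .
  have d: "R k * R k = (L - u) * (L - u) + v * v" using dist_sq_eq[of L 0 u v "R k"] Ak_dist[OF k O] uv by simp
  obtain e where e: "e > 0" "\<forall>w\<in>Gbox. dist w (L, 0) < e \<longrightarrow> R k \<le> dist w (cc k)"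
    using arc[OF k] O by blast
  have v0: "v = 0"
  proof (rule ccontr)
    assume v: "v \<noteq> 0"
    define y0 where "y0 = min (min e a) \<bar>v\<bar> / 2"
    have y0: "0 < y0" "y0 < e" "y0 \<le> a" "y0 \<le> \<bar>v\<bar> / 2" using e a_pos v by (auto simp: y0_def)
    define y where "y = (if v > 0 then y0 else - y0)"
    have "(L, y) \<in> opening_R L a" using y0 unfolding opening_R_def y_def by auto
    then have wG: "(L, y) \<in> Gbox" using Opn_Fr Fr_G by blast
    have "dist (L, y) (L, 0) < e" using y0 by (simp add: dist_Pair_Pair dist_real_def y_def)
    then have "R k \<le> dist (L, y) (u, v)" using e(2) wG uv by auto
    from le_dist_sq[OF less_imp_le[OF Rk] this] have "R k * R k \<le> (L - u) * (L - u) + (y - v) * (y - v)" .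
    then have "2 * (y * v) \<le> y * y" using d by (simp add: algebra_simps)
    moreover have "y * v = y0 * \<bar>v\<bar>" "y * y = y0 * y0" by (auto simp: y_def)
    ultimately have "2 * (y0 * \<bar>v\<bar>) \<le> y0 * y0" by simp
    then have "2 * \<bar>v\<bar> \<le> y0" using y0(1) by (simp add: algebra_simps)
    then show False using y0(4) v by simp
  qed
  have u0: "u \<ge> L"
  proof (rule ccontr)
    assume u: "\<not> u \<ge> L"
    define t0 where "t0 = min (min e (L/2)) (L - u) / 2"
    have t0: "0 < t0" "t0 < e" "t0 \<le> L/2" "t0 \<le> (L - u) / 2" using e L_pos u by (auto simp: t0_def)
    have "(L - t0, 0) \<in> interior Gbox" by (rule segR) (use t0 in auto)
    then have wG: "(L - t0, 0) \<in> Gbox" using interior_subset by blast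
    have "dist (L - t0, 0::real) (L, 0) < e" using t0 by (simp add: dist_Pair_Pair dist_real_def)
    then have "R k \<le> dist (L - t0, 0) (u, v)" using e(2) wG uv by auto
    from le_dist_sq[OF less_imp_le[OF Rk] this] have "R k * R k \<le> (L - t0 - u) * (L - t0 - u) + (0 - v) * (0 - v)" .
    then have "2 * (t0 * (L - u)) \<le> t0 * t0" using d by (simp add: algebra_simps)
    then have "t0 * (2 * (L - u)) \<le> t0 * t0" by (simp add: algebra_simps)
    then have "2 * (L - u) \<le> t0" using t0(1) by (simp add: mult_le_cancel_left_pos)
    then show False using t0(4) u by simp
  qed
  have ue: "u = L + R k"
  proof -
    have "(u - L) * (u - L) = R k * R k" using d v0 by (simp add: algebra_simps)
    moreover have "(u - L + R k) * (u - L - R k) = (u - L) * (u - L) - R k * R k" by (simp add: algebra_simps)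
    ultimately have "(u - L + R k) * (u - L - R k) = 0" by simp
    then have "u - L + R k = 0 \<or> u - L - R k = 0" by simp
    then show ?thesis using u0 Rk by auto
  qed
  obtain t1 t2 where t: "t1 < t2" "t2 - t1 < 2 * pi"
    "\<And>s. s \<in> {t1..t2} \<Longrightarrow> (fst (cc k) + R k * cos s, snd (cc k) + R k * sin s) \<in> Gbox"
    using arc_cos[OF k] by blast
  have c1: "cos (s - pi) = 1" if "s \<in> {t1..t2}" for s
  proof -
    have "fst (cc k) + R k * cos s \<le> L" using xrange t(3)[OF that] by blast
    then have "R k * (1 + cos s) \<le> 0" using uv ue by (simp add: algebra_simps)
    then have "1 + cos s \<le> 0" using Rk by (simp add: mult_le_0_iff)
    then have "cos s = - 1" using cos_ge_minus_one[of s] by linarith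
    then show ?thesis by simp
  qed
  have "t1 - pi < t2 - pi" "(t2 - pi) - (t1 - pi) < 2 * pi" using t by auto
  then show False using cos1_gap[OF c1 c1] t(1) by auto
qed

lemma O_notCor: "(0, 0) \<notin> Cor"
proof
  assume "(0, 0) \<in> Cor"
  then obtain i j where ij: "i \<in> {0..b+1}" "j \<in> {0..b+1}" "i \<noteq> j"
    "(0, 0) \<in> piece L a b A i" "(0, 0) \<in> piece L a b A j" unfolding corners_def by blast
  have "i' = 0" if "i' \<in> {0..b+1}" "(0, 0) \<in> piece L a b A i'" for i'
  proof (rule ccontr)
    assume i0: "i' \<noteq> 0"
    show False
    proof (cases "i' = b + 1")
      case True
      then show False using that L_pos unfolding piece_def opening_R_def by auto
    next
      case False
      then have "i' \<in> {1..b}" using that i0 by auto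
      then show False using that O_notAk piecek by auto
    qed
  qed
  then have "i = 0" "j = 0" using ij by blast+
  then show False using ij(3) by simp
qed

lemma LO_notCor: "(L, 0) \<notin> Cor"
proof
  assume "(L, 0) \<in> Cor"
  then obtain i j where ij: "i \<in> {0..b+1}" "j \<in> {0..b+1}" "i \<noteq> j"
    "(L, 0) \<in> piece L a b A i" "(L, 0) \<in> piece L a b A j" unfolding corners_def by blast
  have "i' = b + 1" if "i' \<in> {0..b+1}" "(L, 0) \<in> piece L a b A i'" for i'
  proof (rule ccontr)
    assume i0: "i' \<noteq> b + 1"
    show False
    proof (cases "i' = 0")
      case True
      then show False using that L_pos unfolding piece_def opening_L_def by auto
    next
      case False
      then have "i' \<in> {1..b}" using that i0 by auto
      then show False using that LO_notAk piecek by auto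
    qed
  qed
  then have "i = b + 1" "j = b + 1" using ij by blast+
  then show False using ij(3) by simp
qed

end

lemma reflect_scale: "reflect w (c *\<^sub>R v) = c *\<^sub>R reflect w v"
  by (simp add: reflect_def algebra_simps)

lemma reflect_invol:
  fixes w v :: "real \<times> real"
  assumes "w \<noteq> 0" shows "reflect w (reflect w v) = v"
proof -
  define c where "c = 2 * (v \<bullet> w) / (w \<bullet> w)"
  have ww: "w \<bullet> w \<noteq> 0" using assms by simp
  have r1: "reflect w v = v - c *\<^sub>R w" by (simp add: reflect_def c_def)
  have "(v - c *\<^sub>R w) \<bullet> w = v \<bullet> w - c * (w \<bullet> w)" by (simp add: inner_diff_left)
  then have "2 * ((v - c *\<^sub>R w) \<bullet> w) / (w \<bullet> w) = c - 2 * c"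
    using ww by (simp add: c_def field_simps)
  then have "reflect w (v - c *\<^sub>R w) = (v - c *\<^sub>R w) - (c - 2 * c) *\<^sub>R w"
    unfolding reflect_def by simp
  also have "\<dots> = v" by (simp add: algebra_simps)
  finally show ?thesis using r1 by simp
qed

context cellctx
begin

definition seg_ok :: "real \<times> real \<Rightarrow> real \<times> real \<Rightarrow> bool" where
  "seg_ok x y \<longleftrightarrow> x \<noteq> y \<and> closed_segment x y \<subseteq> cell Gbox L r \<and> closed_segment x y \<inter> Opn = {} \<and>
     closed_segment x y \<inter> Cor = {} \<and> \<not> tangent_to_disk L r x y"

lemma good_seg: assumes "good \<theta> z" shows "seg_ok \<theta> z" "seg_ok z \<theta>"
  using assms unfolding good_def seg_ok_def by (auto simp: closed_segment_commute)

lemma Lr: "r < L/2"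
proof -
  have "r < dist cD (0, 0)" by (rule Fr_notcball[OF O_Fr])
  then show ?thesis using L_pos by (simp add: cD_eq dist_Pair_Pair dist_real_def)
qed

abbreviation "\<theta>L \<equiv> (L/2 - r, 0::real)"
abbreviation "\<theta>R \<equiv> (L/2 + r, 0::real)"

lemma \<theta>L_S: "\<theta>L \<in> S" using r_pos by (simp add: cD_eq dist_Pair_Pair dist_real_def)
lemma \<theta>R_S: "\<theta>R \<in> S" using r_pos by (simp add: cD_eq dist_Pair_Pair dist_real_def)

lemma segpts_L: assumes "x \<in> closed_segment (0, 0) \<theta>L" obtains t where "0 \<le> t" "t \<le> L/2 - r" "x = (t, 0)"
proof -
  obtain s where s: "0 \<le> s" "s \<le> 1" "x = (1 - s) *\<^sub>R (0, 0) + s *\<^sub>R \<theta>L" using assms in_segment(1) by blast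
  have "x = (s * (L/2 - r), 0)" using s(3) by simp
  moreover have "0 \<le> s * (L/2 - r)" using s Lr by simp
  moreover have "s * (L/2 - r) \<le> 1 * (L/2 - r)" using s Lr by (intro mult_right_mono) auto
  ultimately show ?thesis using that by auto
qed

lemma segpts_R: assumes "x \<in> closed_segment \<theta>R (L, 0)" obtains t where "L/2 + r \<le> t" "t \<le> L" "x = (t, 0)"
proof -
  obtain s where s: "0 \<le> s" "s \<le> 1" "x = (1 - s) *\<^sub>R \<theta>R + s *\<^sub>R (L, 0)" using assms in_segment(1) by blast
  have "x = (L/2 + r + s * (L/2 - r), 0)" using s(3) by (simp add: field_simps)
  moreover have "0 \<le> s * (L/2 - r)" using s Lr by simp
  moreover have "s * (L/2 - r) \<le> 1 * (L/2 - r)" using s Lr by (intro mult_right_mono) auto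
  ultimately show ?thesis using that by auto
qed

lemma ptL_facts: assumes "0 \<le> t" "t \<le> L/2 - r"
  shows "(t, 0) \<in> Gbox" "(t, 0) \<in> Fr \<Longrightarrow> t = 0" "dist cD (t, 0) = L/2 - t"
proof -
  show "dist cD (t, 0) = L/2 - t" using assms Lr r_pos by (auto simp: cD_eq dist_Pair_Pair dist_real_def abs_if)
  show "(t, 0) \<in> Gbox"
  proof (cases "t = 0")
    case True then show ?thesis using O_Fr Fr_G by auto
  next
    case False
    then have "(t, 0) \<in> interior Gbox" using assms r_pos by (intro segL) auto
    then show ?thesis using interior_subset by blast
  qed
  show "(t, 0) \<in> Fr \<Longrightarrow> t = 0"
  proof (rule ccontr)
    assume "(t, 0) \<in> Fr" "t \<noteq> 0"
    moreover have "(t, 0) \<in> interior Gbox" using assms r_pos \<open>t \<noteq> 0\<close> by (intro segL) auto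
    ultimately show False by (simp add: frontier_def)
  qed
qed

lemma ptR_facts: assumes "L/2 + r \<le> t" "t \<le> L"
  shows "(t, 0) \<in> Gbox" "(t, 0) \<in> Fr \<Longrightarrow> t = L" "dist cD (t, 0) = t - L/2"
proof -
  show "dist cD (t, 0) = t - L/2" using assms r_pos by (auto simp: cD_eq dist_Pair_Pair dist_real_def abs_if)
  show "(t, 0) \<in> Gbox"
  proof (cases "t = L")
    case True then show ?thesis using LO_Fr Fr_G by auto
  next
    case False
    then have "(t, 0) \<in> interior Gbox" using assms r_pos by (intro segR) auto
    then show ?thesis using interior_subset by blast
  qed
  show "(t, 0) \<in> Fr \<Longrightarrow> t = L"
  proof (rule ccontr)
    assume "(t, 0) \<in> Fr" "t \<noteq> L"
    moreover have "(t, 0) \<in> interior Gbox" using assms r_pos \<open>t \<noteq> L\<close> by (intro segR) auto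
    ultimately show False by (simp add: frontier_def)
  qed
qed

lemma first_seg:
  shows "(0, 0) \<noteq> \<theta>L" "closed_segment (0, 0) \<theta>L \<subseteq> cell Gbox L r"
    "\<forall>x\<in>closed_segment (0, 0) \<theta>L. x \<in> Opn \<longrightarrow> x = (0, 0)"
    "closed_segment (0, 0) \<theta>L \<inter> Cor = {}" "\<not> tangent_to_disk L r (0, 0) \<theta>L"
proof -
  show "(0, 0) \<noteq> \<theta>L" using Lr by simp
  show "closed_segment (0, 0) \<theta>L \<subseteq> cell Gbox L r"
  proof
    fix x assume "x \<in> closed_segment (0, 0) \<theta>L"
    then obtain t where t: "0 \<le> t" "t \<le> L/2 - r" "x = (t, 0)" by (rule segpts_L)
    show "x \<in> cell Gbox L r" using ptL_facts[OF t(1,2)] t unfolding cell_def by auto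
  qed
  show "\<forall>x\<in>closed_segment (0, 0) \<theta>L. x \<in> Opn \<longrightarrow> x = (0, 0)"
  proof (intro ballI impI)
    fix x assume "x \<in> closed_segment (0, 0) \<theta>L" "x \<in> Opn"
    then obtain t where t: "0 \<le> t" "t \<le> L/2 - r" "x = (t, 0)" by (elim segpts_L)
    then show "x = (0, 0)" using ptL_facts(2)[OF t(1,2)] \<open>x \<in> Opn\<close> Opn_Fr by auto
  qed
  show "closed_segment (0, 0) \<theta>L \<inter> Cor = {}"
  proof (rule ccontr)
    assume "closed_segment (0, 0) \<theta>L \<inter> Cor \<noteq> {}"
    then obtain x where x: "x \<in> closed_segment (0, 0) \<theta>L" "x \<in> Cor" by blast
    then obtain t where t: "0 \<le> t" "t \<le> L/2 - r" "x = (t, 0)" by (elim segpts_L)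
    then have "x = (0, 0)" using ptL_facts(2)[OF t(1,2)] x(2) Cor_Fr by auto
    then show False using x(2) O_notCor by simp
  qed
  show "\<not> tangent_to_disk L r (0, 0) \<theta>L"
  proof
    assume "tangent_to_disk L r (0, 0) \<theta>L"
    then obtain x where x: "x \<in> closed_segment (0, 0) \<theta>L" "dist x cD = r" "(\<theta>L - (0, 0)) \<bullet> (x - cD) = 0"
      unfolding tangent_to_disk_def by blast
    then obtain t where t: "0 \<le> t" "t \<le> L/2 - r" "x = (t, 0)" by (elim segpts_L)
    then have "t = L/2 - r" using ptL_facts(3)[OF t(1,2)] x(2) by (simp add: dist_commute)
    then have "(\<theta>L - (0, 0)) \<bullet> (x - cD) = (L/2 - r) * (- r)" using t by (simp add: cD_eq)
    moreover have "(L/2 - r) * (- r) \<noteq> 0" using Lr r_pos by simp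
    ultimately show False using x(3) by simp
  qed
qed

lemma last_seg:
  shows "\<theta>R \<noteq> (L, 0)" "closed_segment \<theta>R (L, 0) \<subseteq> cell Gbox L r"
    "\<forall>x\<in>closed_segment \<theta>R (L, 0). x \<in> Opn \<longrightarrow> x = (L, 0)"
    "closed_segment \<theta>R (L, 0) \<inter> Cor = {}" "\<not> tangent_to_disk L r \<theta>R (L, 0)"
proof -
  show "\<theta>R \<noteq> (L, 0)" using Lr by simp
  show "closed_segment \<theta>R (L, 0) \<subseteq> cell Gbox L r"
  proof
    fix x assume "x \<in> closed_segment \<theta>R (L, 0)"
    then obtain t where t: "L/2 + r \<le> t" "t \<le> L" "x = (t, 0)" by (rule segpts_R)
    show "x \<in> cell Gbox L r" using ptR_facts[OF t(1,2)] t unfolding cell_def by auto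
  qed
  show "\<forall>x\<in>closed_segment \<theta>R (L, 0). x \<in> Opn \<longrightarrow> x = (L, 0)"
  proof (intro ballI impI)
    fix x assume "x \<in> closed_segment \<theta>R (L, 0)" "x \<in> Opn"
    then obtain t where t: "L/2 + r \<le> t" "t \<le> L" "x = (t, 0)" by (elim segpts_R)
    then show "x = (L, 0)" using ptR_facts(2)[OF t(1,2)] \<open>x \<in> Opn\<close> Opn_Fr by auto
  qed
  show "closed_segment \<theta>R (L, 0) \<inter> Cor = {}"
  proof (rule ccontr)
    assume "closed_segment \<theta>R (L, 0) \<inter> Cor \<noteq> {}"
    then obtain x where x: "x \<in> closed_segment \<theta>R (L, 0)" "x \<in> Cor" by blast
    then obtain t where t: "L/2 + r \<le> t" "t \<le> L" "x = (t, 0)" by (elim segpts_R)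
    then have "x = (L, 0)" using ptR_facts(2)[OF t(1,2)] x(2) Cor_Fr by auto
    then show False using x(2) LO_notCor by simp
  qed
  show "\<not> tangent_to_disk L r \<theta>R (L, 0)"
  proof
    assume "tangent_to_disk L r \<theta>R (L, 0)"
    then obtain x where x: "x \<in> closed_segment \<theta>R (L, 0)" "dist x cD = r" "((L, 0) - \<theta>R) \<bullet> (x - cD) = 0"
      unfolding tangent_to_disk_def by blast
    then obtain t where t: "L/2 + r \<le> t" "t \<le> L" "x = (t, 0)" by (elim segpts_R)
    then have "t = L/2 + r" using ptR_facts(3)[OF t(1,2)] x(2) by (simp add: dist_commute)
    then have "((L, 0) - \<theta>R) \<bullet> (x - cD) = (L/2 - r) * r" using t by (simp add: cD_eq algebra_simps)
    moreover have "(L/2 - r) * r \<noteq> 0" using Lr r_pos by simp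
    ultimately show False using x(3) by simp
  qed
qed

end

context cellctx
begin

definition bounce3 :: "real \<times> real \<Rightarrow> real \<times> real \<Rightarrow> real \<times> real \<Rightarrow> bool" where
  "bounce3 \<theta>1 z \<theta>2 \<longleftrightarrow> (\<exists>k\<in>{1..b}. z \<in> A k \<and> good \<theta>1 z \<and> good \<theta>2 z \<and>
     (\<exists>s>0. \<theta>2 - z = s *\<^sub>R reflect (z - cc k) (z - \<theta>1)))"

lemma bounce3_sym: assumes "bounce3 \<theta>1 z \<theta>2" shows "bounce3 \<theta>2 z \<theta>1"
proof -
  obtain k s where k: "k \<in> {1..b}" "z \<in> A k" "good \<theta>1 z" "good \<theta>2 z" "s > 0"
    "\<theta>2 - z = s *\<^sub>R reflect (z - cc k) (z - \<theta>1)"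
    using assms unfolding bounce3_def by blast
  have n0: "z - cc k \<noteq> 0" using Ak_dist[OF k(1,2)] Rpos[OF k(1)] by (auto simp: dist_norm)
  have e1: "z - \<theta>2 = (- s) *\<^sub>R reflect (z - cc k) (z - \<theta>1)" using k(6) by (simp add: algebra_simps)
  have "reflect (z - cc k) (z - \<theta>2) = (- s) *\<^sub>R (z - \<theta>1)"
    unfolding e1 reflect_scale reflect_invol[OF n0] ..
  then have "reflect (z - cc k) (z - \<theta>2) = s *\<^sub>R (\<theta>1 - z)" by (simp add: algebra_simps)
  then have "\<theta>1 - z = (1 / s) *\<^sub>R reflect (z - cc k) (z - \<theta>2)" using k(5) by simp
  then show ?thesis unfolding bounce3_def using k(1-5)
    by (intro bexI[of _ k] conjI exI[of _ "1/s"]) auto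
qed

definition reachq :: "real \<times> real \<Rightarrow> real \<times> real \<Rightarrow> bool" where
  "reachq x y \<longleftrightarrow> (\<exists>(m::nat) (q::nat \<Rightarrow> real \<times> real). q 0 = x \<and> q (2*m) = y \<and>
     (\<forall>j<m. bounce3 (q (2*j)) (q (2*j+1)) (q (2*j+2))))"

lemma reach_sym: assumes "reachq x y" shows "reachq y x"
proof -
  obtain m :: nat and q :: "nat \<Rightarrow> real \<times> real" where q: "q 0 = x" "q (2*m) = y" "\<forall>j<m. bounce3 (q (2*j)) (q (2*j+1)) (q (2*j+2))"
    using assms unfolding reachq_def by blast
  define q' where "q' i = q (2*m - i)" for i
  have "\<forall>j<m. bounce3 (q' (2*j)) (q' (2*j+1)) (q' (2*j+2))"
  proof (intro allI impI)
    fix j assume j: "j < m"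
    define j' where "j' = m - 1 - j"
    have j': "j' < m" using j by (simp add: j'_def)
    have e: "2*m - 2*j = 2*j' + 2" "2*m - (2*j+1) = 2*j'+1" "2*m - (2*j+2) = 2*j'"
      using j by (simp_all add: j'_def)
    have "bounce3 (q (2*j')) (q (2*j'+1)) (q (2*j'+2))" using q(3) j' by blast
    then have "bounce3 (q (2*j'+2)) (q (2*j'+1)) (q (2*j'))" by (rule bounce3_sym)
    then show "bounce3 (q' (2*j)) (q' (2*j+1)) (q' (2*j+2))" unfolding q'_def e .
  qed
  moreover have "q' 0 = y" "q' (2*m) = x" using q by (simp_all add: q'_def)
  ultimately show ?thesis unfolding reachq_def by blast
qed

lemma reach_trans: assumes "reachq x y" "reachq y w" shows "reachq x w"
proof -
  obtain m1 :: nat and q1 :: "nat \<Rightarrow> real \<times> real" where q1: "q1 0 = x" "q1 (2*m1) = y" "\<forall>j<m1. bounce3 (q1 (2*j)) (q1 (2*j+1)) (q1 (2*j+2))"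
    using assms(1) unfolding reachq_def by blast
  obtain m2 :: nat and q2 :: "nat \<Rightarrow> real \<times> real" where q2: "q2 0 = y" "q2 (2*m2) = w" "\<forall>j<m2. bounce3 (q2 (2*j)) (q2 (2*j+1)) (q2 (2*j+2))"
    using assms(2) unfolding reachq_def by blast
  define q where "q i = (if i \<le> 2*m1 then q1 i else q2 (i - 2*m1))" for i
  have qe: "q i = q2 (i - 2*m1)" if "i \<ge> 2*m1" for i
    using that q1(2) q2(1) by (cases "i = 2*m1") (auto simp: q_def)
  have "\<forall>j<m1+m2. bounce3 (q (2*j)) (q (2*j+1)) (q (2*j+2))"
  proof (intro allI impI)
    fix j assume j: "j < m1 + m2"
    show "bounce3 (q (2*j)) (q (2*j+1)) (q (2*j+2))"
    proof (cases "j < m1")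
      case True
      then show ?thesis using q1(3) by (simp add: q_def)
    next
      case False
      define j' where "j' = j - m1"
      have j': "j' < m2" "2*j - 2*m1 = 2*j'" "2*j+1 - 2*m1 = 2*j'+1" "2*j+2 - 2*m1 = 2*j'+2"
        using False j by (auto simp: j'_def)
      have "q (2*j) = q2 (2*j')" "q (2*j+1) = q2 (2*j'+1)" "q (2*j+2) = q2 (2*j'+2)"
        using qe[of "2*j"] qe[of "2*j+1"] qe[of "2*j+2"] False j' by auto
      then show ?thesis using q2(3) j'(1) by simp
    qed
  qed
  moreover have "q 0 = x" using q1 by (simp add: q_def)
  moreover have "q (2*(m1+m2)) = w" using qe[of "2*(m1+m2)"] q2(2) by simp
  ultimately show ?thesis unfolding reachq_def by blast
qed

lemma reach_bounce: assumes "bounce x y" shows "reachq x y"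
proof -
  obtain k z where kz: "k \<in> {1..b}" "z \<in> A k" "good x z" "good y z"
      "\<exists>s>0. y - z = s *\<^sub>R reflect (z - cc k) (z - x)"
    using assms unfolding bounce_def by blast
  then have b3: "bounce3 x z y" unfolding bounce3_def by blast
  define q where "q i = (if i = 0 then x else if i = 1 then z else y)" for i :: nat
  have "q 0 = x" "q (2*1) = y" "\<forall>j<1. bounce3 (q (2*j)) (q (2*j+1)) (q (2*j+2))"
    using b3 by (auto simp: q_def)
  then show ?thesis unfolding reachq_def by blast
qed

lemma reach_LR: assumes oc: "one_controllable L a r b cc A Gbox" shows "reachq \<theta>L \<theta>R"
proof (rule connected_equivalence_relation[of S])
  show "connected S" by (rule connected_sphere) simp
  show "\<theta>L \<in> S" by (rule \<theta>L_S)
  show "\<theta>R \<in> S" by (rule \<theta>R_S)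
  show "\<And>x y. reachq x y \<Longrightarrow> x \<in> S \<Longrightarrow> y \<in> S \<Longrightarrow> reachq y x" by (rule reach_sym)
  show "\<And>x y z. reachq x y \<Longrightarrow> reachq y z \<Longrightarrow> x \<in> S \<Longrightarrow> y \<in> S \<Longrightarrow> z \<in> S \<Longrightarrow> reachq x z"
    by (rule reach_trans)
  fix x assume x: "x \<in> S"
  obtain \<epsilon> where \<epsilon>: "\<epsilon> > 0" "\<forall>\<theta>2\<in>S. dist \<theta>2 x < \<epsilon> \<longrightarrow> bounce x \<theta>2"
    using local_reach[OF oc x] by blast
  show "\<exists>T. openin (top_of_set S) T \<and> x \<in> T \<and> (\<forall>y\<in>T. reachq x y)"
  proof (intro exI[of _ "S \<inter> ball x \<epsilon>"] conjI ballI)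
    show "openin (top_of_set S) (S \<inter> ball x \<epsilon>)" by (rule openin_open_Int) simp
    show "x \<in> S \<inter> ball x \<epsilon>" using x \<epsilon>(1) by simp
    fix y assume "y \<in> S \<inter> ball x \<epsilon>"
    then have "y \<in> S" "dist y x < \<epsilon>" by (auto simp: dist_commute)
    then show "reachq x y" using \<epsilon>(2) reach_bounce by blast
  qed
qed

end

lemma parity_split: "\<exists>j. (x::nat) = 2*j \<or> x = 2*j+1" by presburger

context cellctx
begin

lemma chain_evenS:
  fixes q :: "nat \<Rightarrow> real \<times> real" and m j :: nat
  assumes q0: "q 0 \<in> S" and ch: "\<forall>j<m. bounce3 (q (2*j)) (q (2*j+1)) (q (2*j+2))" and j: "j \<le> m"
  shows "q (2*j) \<in> S"
proof (cases j)
  case 0 then show ?thesis using q0 by simp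
next
  case (Suc j')
  then have "bounce3 (q (2*j')) (q (2*j'+1)) (q (2*j'+2))" using ch j by simp
  then have "q (2*j'+2) \<in> S" unfolding bounce3_def good_def by blast
  then show ?thesis using Suc by simp
qed

lemma chain_oddFr:
  fixes q :: "nat \<Rightarrow> real \<times> real" and m j :: nat
  assumes ch: "\<forall>j<m. bounce3 (q (2*j)) (q (2*j+1)) (q (2*j+2))" and j: "j < m"
  shows "q (2*j+1) \<in> Fr"
  using ch j unfolding bounce3_def good_def by blast

lemma chain_mid:
  fixes q :: "nat \<Rightarrow> real \<times> real" and m i :: nat
  assumes ch: "\<forall>j<m. bounce3 (q (2*j)) (q (2*j+1)) (q (2*j+2))" and i: "1 \<le> i" "i \<le> 2*m"
  shows "seg_ok (q (i - 1)) (q i)"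
proof -
  obtain j where "i - 1 = 2*j \<or> i - 1 = 2*j+1" using parity_split by blast
  then show ?thesis
  proof
    assume h: "i - 1 = 2*j"
    then have j: "j < m" "i = 2*j+1" using i by auto
    have "bounce3 (q (2*j)) (q (2*j+1)) (q (2*j+2))" using ch j by blast
    then have "good (q (2*j)) (q (2*j+1))" unfolding bounce3_def by blast
    then show ?thesis using good_seg(1) h j by simp
  next
    assume h: "i - 1 = 2*j+1"
    then have j: "j < m" "i = 2*j+2" using i by auto
    have "bounce3 (q (2*j)) (q (2*j+1)) (q (2*j+2))" using ch j by blast
    then have "good (q (2*j+2)) (q (2*j+1))" unfolding bounce3_def by blast
    then show ?thesis using good_seg(2) h j by simp
  qed
qed

lemma main_locale:
  assumes oc: "one_controllable L a r b cc A Gbox"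
  shows "\<exists>p n. admissible_path L a r b cc A Gbox p n \<and>
           p 0 = (0, 0) \<and> p n = (L, 0) \<and> snd (p 1) = 0 \<and> snd (p (n - 1)) = 0"
proof -
  obtain m :: nat and q :: "nat \<Rightarrow> real \<times> real" where q: "q 0 = \<theta>L" "q (2*m) = \<theta>R"
    and ch: "\<forall>j<m. bounce3 (q (2*j)) (q (2*j+1)) (q (2*j+2))"
    using reach_LR[OF oc] unfolding reachq_def by blast
  have q0S: "q 0 \<in> S" using q(1) \<theta>L_S by simp
  define n where "n = 2*m+2"
  define p where "p i = (if i = 0 then (0, 0) else if i \<le> 2*m+1 then q (i - 1) else (L, 0))" for i
  have p0: "p 0 = (0, 0)" by (simp add: p_def)
  have pn: "p n = (L, 0)" by (simp add: p_def n_def)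
  have pq: "p i = q (i - 1)" if "1 \<le> i" "i \<le> 2*m+1" for i using that by (simp add: p_def)
  have p1: "p 1 = \<theta>L" using pq[of 1] q(1) by simp
  have pn1: "p (n - 1) = \<theta>R" using pq[of "2*m+1"] q(2) by (simp add: n_def)
  have SEG: "p i \<noteq> p (Suc i) \<and> closed_segment (p i) (p (Suc i)) \<subseteq> cell Gbox L r \<and>
      closed_segment (p i) (p (Suc i)) \<inter> Cor = {} \<and> \<not> tangent_to_disk L r (p i) (p (Suc i)) \<and>
      (\<forall>x\<in>closed_segment (p i) (p (Suc i)). x \<in> Opn \<longrightarrow> (i = 0 \<and> x = p 0) \<or> (i = n - 1 \<and> x = p n))"
    if i: "i < n" for i
  proof -
    have "i = 0 \<or> i = 2*m+1 \<or> (1 \<le> i \<and> i \<le> 2*m)" using i unfolding n_def by linarith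
    then consider "i = 0" | "i = 2*m+1" | "1 \<le> i" "i \<le> 2*m" by blast
    then show ?thesis
    proof cases
      case 1
      then have e: "p i = (0, 0)" "p (Suc i) = \<theta>L" using p0 p1 by auto
      show ?thesis unfolding e using first_seg 1 p0 by auto
    next
      case 2
      then have e: "p i = \<theta>R" "p (Suc i) = (L, 0)" "i = n - 1" using pn1 pn by (auto simp: n_def)
      show ?thesis unfolding e(1,2) using last_seg e(3) pn by auto
    next
      case 3
      then have e: "p i = q (i - 1)" "p (Suc i) = q i" using pq[of i] pq[of "Suc i"] by auto
      have "seg_ok (q (i - 1)) (q i)" by (rule chain_mid[OF ch 3])
      then show ?thesis unfolding e seg_ok_def by blast
    qed
  qed
  have VERT: "p i \<in> S \<or> (\<exists>j<m. i = 2*j+2 \<and> p i = q (2*j+1))" if "0 < i" "i < n" for i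
  proof -
    have e: "p i = q (i - 1)" using pq[of i] that by (simp add: n_def)
    obtain j where "i - 1 = 2*j \<or> i - 1 = 2*j+1" using parity_split by blast
    then show ?thesis
    proof
      assume h: "i - 1 = 2*j"
      then have "j \<le> m" using that by (simp add: n_def)
      then have "q (2*j) \<in> S" by (rule chain_evenS[OF q0S ch])
      then show ?thesis using e h by simp
    next
      assume h: "i - 1 = 2*j+1"
      then have "j < m" "i = 2*j+2" using that by (auto simp: n_def)
      then show ?thesis using e h by auto
    qed
  qed
  have bnd: "p i \<in> cell_boundary Gbox L r" if "0 < i" "i < n" for i
  proof -
    from VERT[OF that] show ?thesis
    proof
      assume "p i \<in> S" then show ?thesis by (simp add: cell_boundary_def)
    next
      assume "\<exists>j<m. i = 2*j+2 \<and> p i = q (2*j+1)"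
      then obtain j where "j < m" "p i = q (2*j+1)" by blast
      then show ?thesis using chain_oddFr[OF ch] by (simp add: cell_boundary_def)
    qed
  qed
  have refl: "\<exists>k\<in>{1..b}. p i \<in> A k \<and> (\<exists>s>0. p (Suc i) - p i = s *\<^sub>R reflect (p i - cc k) (p i - p (i - 1)))"
    if "0 < i" "i < n" "p i \<in> Fr" for i
  proof -
    from VERT[OF that(1,2)] show ?thesis
    proof
      assume "p i \<in> S" then show ?thesis using that(3) S_notFr by blast
    next
      assume "\<exists>j<m. i = 2*j+2 \<and> p i = q (2*j+1)"
      then obtain j where j: "j < m" "i = 2*j+2" "p i = q (2*j+1)" by blast
      have "p (Suc i) = q (2*j+2)" using pq[of "Suc i"] j by simp
      moreover have "p (i - 1) = q (2*j)" using pq[of "i - 1"] j by simp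
      moreover have "bounce3 (q (2*j)) (q (2*j+1)) (q (2*j+2))" using ch j by blast
      ultimately show ?thesis using j(3) unfolding bounce3_def by auto
    qed
  qed
  have "admissible_path L a r b cc A Gbox p n"
    unfolding admissible_path_def
  proof (intro conjI allI impI ballI)
    show "1 \<le> n" by (simp add: n_def)
    fix i assume "i < n"
    then show "p i \<noteq> p (Suc i)" "closed_segment (p i) (p (Suc i)) \<subseteq> cell Gbox L r"
      "closed_segment (p i) (p (Suc i)) \<inter> Cor = {}" "\<not> tangent_to_disk L r (p i) (p (Suc i))"
      using SEG by blast+
  next
    fix i assume "0 < i \<and> i < n"
    then show "p i \<in> cell_boundary Gbox L r" using bnd by blast
  next
    fix i assume "0 < i \<and> i < n \<and> p i \<in> Fr"
    then show "\<exists>k\<in>{1..b}. p i \<in> A k \<and> (\<exists>s>0. p (Suc i) - p i = s *\<^sub>R reflect (p i - cc k) (p i - p (i - 1)))"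
      using refl by blast
  next
    fix i x assume "i < n" "x \<in> closed_segment (p i) (p (Suc i))" "x \<in> Opn"
    then show "(i = 0 \<and> x = p 0) \<or> (i = n - 1 \<and> x = p n)" using SEG by blast
  qed
  moreover have "snd (p 1) = 0" "snd (p (n - 1)) = 0" using p1 pn1 by simp_all
  ultimately show ?thesis using p0 pn by blast
qed

end

theorem corollary1:
  fixes L a r :: real and b :: nat and cc :: "nat \<Rightarrow> real \<times> real" and R :: "nat \<Rightarrow> real"
    and A :: "nat \<Rightarrow> (real \<times> real) set" and Gbox :: "(real \<times> real) set"
  assumes "is_cell L a r b cc R A Gbox"
    and "one_controllable L a r b cc A Gbox"
  shows "\<exists>p n. admissible_path L a r b cc A Gbox p n \<and>
           p 0 = (0, 0) \<and> p n = (L, 0) \<and>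
           snd (p 1) = 0 \<and> snd (p (n - 1)) = 0"
proof -
  interpret cellctx L a r b cc R A Gbox by unfold_locales (rule assms(1))
  show ?thesis by (rule main_locale[OF assms(2)])
qed

end
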